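(* Let $\mathcal{T}$ be a conforming mesh of the two-dimensional torus by straight triangles, and let $k\ge 0$. Let $\nabla^\perp:\mathbb{P}_{k+1}\to\mathrm{d}\mathbb{P}_k(\mathcal{C})^2$ be the cellwise rotated gradient $\nabla^\perp\psi=(-\partial_y\psi,\partial_x\psi)^T$, and let $\nabla_{\mathscr{D}'}\cdot:\mathrm{d}\mathbb{P}_k(\mathcal{C})^2\to \mathrm{d}\mathbb{P}_{k-1}(\mathcal{C})\times\mathrm{d}\mathbb{P}_k(\mathcal{F})$ be the distributional divergence, $(\nabla_{\mathscr{D}'}\cdot\mathbf{u})|_c=\nabla\cdot(\mathbf{u}|_c)$ for each cell $c$ and $(\nabla_{\mathscr{D}'}\cdot\mathbf{u})|_f=[\![\mathbf{u}\cdot\mathbf{n}_f]\!]$ for each face $f$. If $\mathbb{K}^2$ denotes the two-dimensional space of uniform (constant) vector fields, then $$\ker(\nabla_{\mathscr{D}'}\cdot)=\operatorname{Range}(\nabla^\perp)\oplus\mathbb{K}^2.$$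
   Context: $\mathcal{C}$, $\mathcal{F}$ are the cells and faces (edges) of the mesh. $\mathbb{P}_{k+1}$: continuous functions, polynomial of total degree $\le k+1$ on each triangle. $\mathrm{d}\mathbb{P}_k(\mathcal{C})^2$: discontinuous vector fields, polynomial of total degree $\le k$ componentwise on each cell. $\mathrm{d}\mathbb{P}_{k-1}(\mathcal{C})$: discontinuous cellwise polynomials of degree $\le k-1$ (zero space if $k=0$). $\mathrm{d}\mathbb{P}_k(\mathcal{F})$: collections of polynomials of degree $\le k$, one on each face. Each face $f$ carries a fixed unit normal $\mathbf{n}_f$; the cell into which $\mathbf{n}_f$ points is the right cell $R$, the other the left cell $L$, and $[\![\mathbf{u}\cdot\mathbf{n}_f]\!]=\mathbf{u}_R\cdot\mathbf{n}_f-\mathbf{u}_L\cdot\mathbf{n}_f$. *)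

theory Defs
  imports "HOL-Analysis.Analysis"
begin

text \<open>The torus is the plane modulo the lattice
  generated by two linearly independent period vectors a, b; a mesh of the torus is
  represented by its periodic lift: finitely many triangles whose lattice translates form
  a conforming triangulation of the plane. Fields on the torus are periodic fields on the plane.\<close>

definition det2 :: "real \<times> real \<Rightarrow> real \<times> real \<Rightarrow> real" where
  "det2 p q = fst p * snd q - snd p * fst q"

definition lattice :: "real \<times> real \<Rightarrow> real \<times> real \<Rightarrow> (real \<times> real) set" where
  "lattice a b = {of_int m *\<^sub>R a + of_int n *\<^sub>R b | m n. True}"

definition tri :: "('c \<Rightarrow> nat \<Rightarrow> real \<times> real) \<Rightarrow> 'c \<Rightarrow> (real \<times> real) set" where
  "tri V c = convex hull (V c ` {0,1,2})"

definition cell :: "('c \<Rightarrow> nat \<Rightarrow> real \<times> real) \<Rightarrow> 'c \<Rightarrow> real \<times> real \<Rightarrow> (real \<times> real) set" where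
  "cell V c l = (\<lambda>x. x + l) ` tri V c"

definition verts :: "('c \<Rightarrow> nat \<Rightarrow> real \<times> real) \<Rightarrow> 'c \<Rightarrow> real \<times> real \<Rightarrow> (real \<times> real) set" where
  "verts V c l = (\<lambda>x. x + l) ` V c ` {0,1,2}"

definition torus_mesh :: "real \<times> real \<Rightarrow> real \<times> real \<Rightarrow> ('c \<Rightarrow> nat \<Rightarrow> real \<times> real) \<Rightarrow> bool" where
  "torus_mesh a b V \<longleftrightarrow>
     det2 a b \<noteq> 0 \<and>
     (\<forall>c. det2 (V c 1 - V c 0) (V c 2 - V c 0) \<noteq> 0) \<and>
     (\<Union>c. \<Union>l\<in>lattice a b. cell V c l) = UNIV \<and>
     (\<forall>c c' l l'. l \<in> lattice a b \<and> l' \<in> lattice a b \<and> (c, l) \<noteq> (c', l') \<longrightarrow>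
        (let S = cell V c l \<inter> cell V c' l' in
           S = {} \<or>
           (\<exists>v. v \<in> verts V c l \<and> v \<in> verts V c' l' \<and> S = {v}) \<or>
           (\<exists>v w. v \<noteq> w \<and> v \<in> verts V c l \<and> v \<in> verts V c' l' \<and>
                  w \<in> verts V c l \<and> w \<in> verts V c' l' \<and> S = closed_segment v w)))"

definition poly2 :: "nat \<Rightarrow> (real \<times> real \<Rightarrow> real) \<Rightarrow> bool" where
  "poly2 d p \<longleftrightarrow> (\<exists>a :: nat \<Rightarrow> nat \<Rightarrow> real.
      \<forall>x y. p (x, y) = (\<Sum>i\<le>d. \<Sum>j\<le>d - i. a i j * x ^ i * y ^ j))"

definition dx :: "(real \<times> real \<Rightarrow> real) \<Rightarrow> real \<times> real \<Rightarrow> real" where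
  "dx f z = deriv (\<lambda>t. f (t, snd z)) (fst z)"

definition dy :: "(real \<times> real \<Rightarrow> real) \<Rightarrow> real \<times> real \<Rightarrow> real" where
  "dy f z = deriv (\<lambda>t. f (fst z, t)) (snd z)"

definition rotgrad :: "(real \<times> real \<Rightarrow> real) \<Rightarrow> real \<times> real \<Rightarrow> real \<times> real" where
  "rotgrad f z = (- dy f z, dx f z)"

definition divg :: "(real \<times> real \<Rightarrow> real \<times> real) \<Rightarrow> real \<times> real \<Rightarrow> real" where
  "divg u z = dx (\<lambda>p. fst (u p)) z + dy (\<lambda>p. snd (u p)) z"

definition edge_normal :: "real \<times> real \<Rightarrow> real \<times> real \<Rightarrow> real \<times> real" where
  "edge_normal v w = (1 / norm (w - v)) *\<^sub>R (snd (w - v), - fst (w - v))"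

text \<open>dP_k(C)^2: one polynomial vector field of degree \<le> k per cell
  (on the translate cell V c l the field is x \<mapsto> u c (x - l)).\<close>
definition dPk :: "nat \<Rightarrow> ('c \<Rightarrow> real \<times> real \<Rightarrow> real \<times> real) \<Rightarrow> bool" where
  "dPk k u \<longleftrightarrow> (\<forall>c. poly2 k (\<lambda>z. fst (u c z)) \<and> poly2 k (\<lambda>z. snd (u c z)))"

definition CGspace :: "real \<times> real \<Rightarrow> real \<times> real \<Rightarrow> ('c \<Rightarrow> nat \<Rightarrow> real \<times> real) \<Rightarrow> nat
    \<Rightarrow> (real \<times> real \<Rightarrow> real) \<Rightarrow> bool" where
  "CGspace a b V d \<psi> \<longleftrightarrow> continuous_on UNIV \<psi> \<and>
     (\<forall>l\<in>lattice a b. \<forall>x. \<psi> (x + l) = \<psi> x) \<and>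
     (\<forall>c. \<exists>p. poly2 d p \<and> (\<forall>x\<in>tri V c. \<psi> x = p x))"

definition rotgrad_range :: "real \<times> real \<Rightarrow> real \<times> real \<Rightarrow> ('c \<Rightarrow> nat \<Rightarrow> real \<times> real) \<Rightarrow> nat
    \<Rightarrow> ('c \<Rightarrow> real \<times> real \<Rightarrow> real \<times> real) \<Rightarrow> bool" where
  "rotgrad_range a b V k u \<longleftrightarrow> dPk k u \<and>
     (\<exists>\<psi>. CGspace a b V (k + 1) \<psi> \<and> (\<forall>c. \<forall>x\<in>interior (tri V c). u c x = rotgrad \<psi> x))"

text \<open>Kernel of the distributional divergence: cellwise divergence vanishes, and the
  normal jump vanishes across every face (an edge shared by the cell V c and a translate
  V c' l, including the case c' = c with l \<noteq> 0).\<close>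
definition div_kernel :: "real \<times> real \<Rightarrow> real \<times> real \<Rightarrow> ('c \<Rightarrow> nat \<Rightarrow> real \<times> real) \<Rightarrow> nat
    \<Rightarrow> ('c \<Rightarrow> real \<times> real \<Rightarrow> real \<times> real) \<Rightarrow> bool" where
  "div_kernel a b V k u \<longleftrightarrow> dPk k u \<and>
     (\<forall>c. \<forall>x\<in>interior (tri V c). divg (u c) x = 0) \<and>
     (\<forall>c c' l v w. l \<in> lattice a b \<and> (c, 0) \<noteq> (c', l) \<and> v \<noteq> w \<and>
        tri V c \<inter> cell V c' l = closed_segment v w \<longrightarrow>
        (\<forall>x\<in>closed_segment v w. inner (u c' (x - l)) (edge_normal v w)
                                   - inner (u c x) (edge_normal v w) = 0))"

definition const_field :: "real \<times> real \<Rightarrow> 'c \<Rightarrow> real \<times> real \<Rightarrow> real \<times> real" where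
  "const_field e = (\<lambda>c x. e)"

end

theory Submission
  imports Defs
begin


definition psq :: "nat \<Rightarrow> (nat \<Rightarrow> nat \<Rightarrow> real) \<Rightarrow> real \<times> real \<Rightarrow> real" where
  "psq N c z = (\<Sum>i\<le>N. \<Sum>j\<le>N. c i j * fst z ^ i * snd z ^ j)"

definition supp :: "nat \<Rightarrow> (nat \<Rightarrow> nat \<Rightarrow> real) \<Rightarrow> bool" where
  "supp N c \<longleftrightarrow> (\<forall>i j. N < i \<or> N < j \<longrightarrow> c i j = 0)"

definition dxc :: "(nat \<Rightarrow> nat \<Rightarrow> real) \<Rightarrow> nat \<Rightarrow> nat \<Rightarrow> real" where
  "dxc c i j = real (Suc i) * c (Suc i) j"

definition dyc :: "(nat \<Rightarrow> nat \<Rightarrow> real) \<Rightarrow> nat \<Rightarrow> nat \<Rightarrow> real" where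
  "dyc c i j = real (Suc j) * c i (Suc j)"

lemma shift_sum:
  fixes f :: "nat \<Rightarrow> real"
  assumes "f (Suc N) = 0"
  shows "(\<Sum>i\<le>N. f i * real i * x ^ (i - 1)) = (\<Sum>i\<le>N. real (Suc i) * f (Suc i) * x ^ i)"
proof -
  define g where "g i = f i * real i * x ^ (i - 1)" for i
  have "(\<Sum>i\<le>Suc N. g i) = g 0 + (\<Sum>i\<le>N. g (Suc i))" by (rule sum.atMost_Suc_shift)
  moreover have "(\<Sum>i\<le>Suc N. g i) = (\<Sum>i\<le>N. g i)" using assms by (simp add: g_def)
  ultimately show ?thesis by (simp add: g_def mult_ac)
qed

lemma supp_dxc: "supp N c \<Longrightarrow> supp N (dxc c)"
  by (auto simp: supp_def dxc_def)
lemma supp_dyc: "supp N c \<Longrightarrow> supp N (dyc c)"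
  by (auto simp: supp_def dyc_def)
lemma dxc_dyc: "dxc (dyc c) = dyc (dxc c)"
  by (auto simp: dxc_def dyc_def fun_eq_iff)

lemma psq_has_derivative:
  assumes "supp N c"
  shows "(psq N c has_derivative (\<lambda>h. fst h * psq N (dxc c) z + snd h * psq N (dyc c) z)) (at z)"
proof -
  have tm: "((\<lambda>w. c i j * fst w ^ i * snd w ^ j) has_derivative
     (\<lambda>h. fst h * (c i j * real i * fst z ^ (i - 1) * snd z ^ j) + snd h * (c i j * fst z ^ i * (real j * snd z ^ (j - 1))))) (at z)" for i j
    apply (rule derivative_eq_intros refl | simp)+
    apply (simp add: algebra_simps)
    done
  have D: "(psq N c has_derivative (\<lambda>h. \<Sum>i\<le>N. \<Sum>j\<le>N. fst h * (c i j * real i * fst z ^ (i - 1) * snd z ^ j) + snd h * (c i j * fst z ^ i * (real j * snd z ^ (j - 1))))) (at z)"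
    unfolding psq_def[abs_def]
    by (intro has_derivative_sum tm)
  have e1: "(\<Sum>i\<le>N. \<Sum>j\<le>N. c i j * real i * fst z ^ (i - 1) * snd z ^ j) = psq N (dxc c) z"
  proof -
    have "(\<Sum>i\<le>N. \<Sum>j\<le>N. c i j * real i * fst z ^ (i - 1) * snd z ^ j)
       = (\<Sum>j\<le>N. (\<Sum>i\<le>N. (c i j * snd z ^ j) * real i * fst z ^ (i - 1)))"
      by (subst sum.swap) (simp add: mult_ac)
    also have "\<dots> = (\<Sum>j\<le>N. (\<Sum>i\<le>N. real (Suc i) * (c (Suc i) j * snd z ^ j) * fst z ^ i))"
      by (intro sum.cong refl shift_sum) (use assms in \<open>simp add: supp_def\<close>)
    also have "\<dots> = psq N (dxc c) z"
      unfolding psq_def dxc_def by (subst sum.swap) (simp add: mult_ac)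
    finally show ?thesis .
  qed
  have e2: "(\<Sum>i\<le>N. \<Sum>j\<le>N. c i j * fst z ^ i * (real j * snd z ^ (j - 1))) = psq N (dyc c) z"
  proof -
    have "(\<Sum>i\<le>N. \<Sum>j\<le>N. c i j * fst z ^ i * (real j * snd z ^ (j - 1)))
       = (\<Sum>i\<le>N. (\<Sum>j\<le>N. (c i j * fst z ^ i) * real j * snd z ^ (j - 1)))"
      by (simp add: mult_ac)
    also have "\<dots> = (\<Sum>i\<le>N. (\<Sum>j\<le>N. real (Suc j) * (c i (Suc j) * fst z ^ i) * snd z ^ j))"
      by (intro sum.cong refl shift_sum) (use assms in \<open>simp add: supp_def\<close>)
    also have "\<dots> = psq N (dyc c) z"
      unfolding psq_def dyc_def by (simp add: mult_ac)
    finally show ?thesis .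
  qed
  show ?thesis
    apply (rule has_derivative_eq_rhs[OF D])
    apply (rule ext)
    apply (simp add: sum.distrib sum_distrib_left[symmetric] e1[symmetric] e2[symmetric])
    done
qed


lemma univ_zero:
  fixes c :: "nat \<Rightarrow> real"
  assumes "a < b" "\<And>x. a < x \<Longrightarrow> x < b \<Longrightarrow> (\<Sum>i\<le>n. c i * x ^ i) = 0"
  shows "\<forall>k\<le>n. c k = 0"
proof -
  have "{a<..<b} \<subseteq> {z. (\<Sum>i\<le>n. c i * z^i) = 0}" using assms(2) by auto
  moreover have "infinite {a<..<b}" using assms(1) by (simp add: infinite_Ioo)
  ultimately have "infinite {z. (\<Sum>i\<le>n. c i * z^i) = 0}" using finite_subset by blast
  then show ?thesis using polyfun_finite_roots[where c=c and n=n] by auto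
qed

lemma psq_zero_open:
  assumes "open S" "z0 \<in> S" "\<And>z. z \<in> S \<Longrightarrow> psq N c z = 0"
  shows "\<forall>i\<le>N. \<forall>j\<le>N. c i j = 0"
proof -
  obtain r where r: "r > 0" "ball z0 r \<subseteq> S" using assms(1,2) open_contains_ball by blast
  obtain x0 y0 where z0: "z0 = (x0, y0)" by fastforce
  have inb: "(x, y) \<in> ball z0 r" if "\<bar>x - x0\<bar> < r/2" "\<bar>y - y0\<bar> < r/2" for x y
  proof -
    have "dist (x, y) z0 \<le> dist x x0 + dist y y0"
      unfolding z0 dist_Pair_Pair by (rule sqrt_sum_squares_le_sum_abs[of "dist x x0" "dist y y0", simplified])
    also have "\<dots> < r" using that by (simp add: dist_real_def)
    finally show ?thesis by (simp add: dist_commute)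
  qed
  have step1: "\<forall>i\<le>N. (\<Sum>j\<le>N. c i j * y ^ j) = 0" if y: "\<bar>y - y0\<bar> < r/2" for y
  proof (rule univ_zero[of "x0 - r/2" "x0 + r/2"])
    show "x0 - r/2 < x0 + r/2" using r by simp
    fix x assume "x0 - r / 2 < x" "x < x0 + r / 2"
    then have "\<bar>x - x0\<bar> < r/2" by arith
    then have "psq N c (x, y) = 0" using inb y r(2) assms(3) by blast
    then show "(\<Sum>i\<le>N. (\<Sum>j\<le>N. c i j * y ^ j) * x ^ i) = 0"
      unfolding psq_def by (simp add: sum_distrib_left mult_ac)
  qed
  show ?thesis
  proof (intro allI impI)
    fix i j assume ij: "i \<le> N" "j \<le> N"
    have "\<forall>k\<le>N. c i k = 0"
    proof (rule univ_zero[of "y0 - r/2" "y0 + r/2"])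
      show "y0 - r/2 < y0 + r/2" using r by simp
      fix y assume "y0 - r / 2 < y" "y < y0 + r / 2"
      then have "\<bar>y - y0\<bar> < r/2" by arith
      then show "(\<Sum>k\<le>N. c i k * y ^ k) = 0" using step1 ij by blast
    qed
    then show "c i j = 0" using ij by blast
  qed
qed

lemma psq_zero_all:
  assumes "\<forall>i\<le>N. \<forall>j\<le>N. c i j = 0" shows "psq N c z = 0"
  using assms unfolding psq_def by simp

lemma poly2_psq:
  assumes "poly2 d p"
  obtains c where "\<And>i j. d < i + j \<Longrightarrow> c i j = 0" "p = psq d c"
proof -
  obtain a where a: "\<And>x y. p (x, y) = (\<Sum>i\<le>d. \<Sum>j\<le>d - i. a i j * x ^ i * y ^ j)"
    using assms unfolding poly2_def by blast
  define c where "c i j = (if i + j \<le> d then a i j else 0)" for i j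
  have pz: "p z = psq d c z" for z
  proof -
    obtain x y where z: "z = (x, y)" by fastforce
    have "(\<Sum>j\<le>d - i. a i j * x ^ i * y ^ j) = (\<Sum>j\<le>d. c i j * x ^ i * y ^ j)" if "i \<le> d" for i
      by (rule sum.mono_neutral_cong_left) (use that in \<open>auto simp: c_def\<close>)
    then show ?thesis unfolding z a psq_def by simp
  qed
  have "p = psq d c" using pz by (rule ext)
  then show ?thesis using that[of c] by (auto simp: c_def)
qed

lemma psq_poly2:
  assumes "\<And>i j. d < i + j \<Longrightarrow> c i j = 0"
  shows "poly2 d (psq d c)"
  unfolding poly2_def
proof (intro exI allI)
  fix x y
  have "(\<Sum>j\<le>d - i. c i j * x ^ i * y ^ j) = (\<Sum>j\<le>d. c i j * x ^ i * y ^ j)" if "i \<le> d" for i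
    by (rule sum.mono_neutral_cong_left) (use that assms in auto)
  then show "psq d c (x, y) = (\<Sum>i\<le>d. \<Sum>j\<le>d - i. c i j * x ^ i * y ^ j)"
    unfolding psq_def by simp
qed

lemma supp_tri: "(\<And>i j. d < i + j \<Longrightarrow> c i j = 0) \<Longrightarrow> supp d c"
  unfolding supp_def by (metis add_lessD1 add.commute le_add2 le_less_trans not_less)

lemma psq_mono:
  assumes "supp N c" "N \<le> M"
  shows "psq M c = psq N c"
proof
  fix z
  have "(\<Sum>i\<le>M. \<Sum>j\<le>M. c i j * fst z ^ i * snd z ^ j) = (\<Sum>i\<le>M. \<Sum>j\<le>N. c i j * fst z ^ i * snd z ^ j)"
    by (intro sum.cong refl sum.mono_neutral_cong_right) (use assms in \<open>auto simp: supp_def\<close>)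
  also have "\<dots> = (\<Sum>i\<le>N. \<Sum>j\<le>N. c i j * fst z ^ i * snd z ^ j)"
    by (intro sum.mono_neutral_cong_right) (use assms in \<open>auto simp: supp_def\<close>)
  finally show "psq M c z = psq N c z" unfolding psq_def .
qed


lemma psq_add: "psq N (\<lambda>i j. c i j + d i j) z = psq N c z + psq N d z"
  unfolding psq_def by (simp add: distrib_right sum.distrib)

lemma psq_uminus: "psq N (\<lambda>i j. - c i j) z = - psq N c z"
  unfolding psq_def by (simp add: sum_negf)

lemma dx_dy_local:
  assumes "open S" "z \<in> S" "\<And>w. w \<in> S \<Longrightarrow> f w = g w"
  shows "dx f z = dx g z" "dy f z = dy g z"
proof -
  have c1: "continuous_on UNIV (\<lambda>t::real. (t, snd z))" by (intro continuous_intros)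
  have "open ((\<lambda>t. (t, snd z)) -` S)" by (intro continuous_open_vimage assms(1)) (intro continuous_intros)
  moreover have "fst z \<in> (\<lambda>t. (t, snd z)) -` S" using assms(2) by simp
  ultimately have "eventually (\<lambda>t. (t, snd z) \<in> S) (nhds (fst z))"
    using eventually_nhds by blast
  then have "eventually (\<lambda>t. f (t, snd z) = g (t, snd z)) (nhds (fst z))"
    by eventually_elim (use assms(3) in auto)
  then show "dx f z = dx g z" unfolding dx_def by (intro deriv_cong_ev refl)
  have c2: "continuous_on UNIV (\<lambda>t::real. (fst z, t))" by (intro continuous_intros)
  have "open ((\<lambda>t. (fst z, t)) -` S)" by (intro continuous_open_vimage assms(1)) (intro continuous_intros)
  moreover have "snd z \<in> (\<lambda>t. (fst z, t)) -` S" using assms(2) by simp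
  ultimately have "eventually (\<lambda>t. (fst z, t) \<in> S) (nhds (snd z))"
    using eventually_nhds by blast
  then have "eventually (\<lambda>t. f (fst z, t) = g (fst z, t)) (nhds (snd z))"
    by eventually_elim (use assms(3) in auto)
  then show "dy f z = dy g z" unfolding dy_def by (intro deriv_cong_ev refl)
qed

lemma dx_dy_of_has_derivative:
  assumes "(f has_derivative (\<lambda>h. fst h * A + snd h * B)) (at z)"
  shows "dx f z = A" "dy f z = B"
proof -
  have D1: "((\<lambda>t::real. (t, snd z)) has_derivative (\<lambda>h. (h, 0))) (at (fst z))"
    by (rule derivative_eq_intros refl)+ simp
  have D2: "(f has_derivative (\<lambda>h. fst h * A + snd h * B)) (at ((\<lambda>t::real. (t, snd z)) (fst z)))"
    using assms by simp
  have "((\<lambda>t. f (t, snd z)) has_derivative (\<lambda>h. h * A)) (at (fst z))"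
    using has_derivative_compose[OF D1 D2] by simp
  moreover have "(\<lambda>h. h * A) = (*) A" by (rule ext) simp
  ultimately have "((\<lambda>t. f (t, snd z)) has_real_derivative A) (at (fst z))"
    by (simp add: has_field_derivative_def)
  then show "dx f z = A" unfolding dx_def by (rule DERIV_imp_deriv)
  have E1: "((\<lambda>t::real. (fst z, t)) has_derivative (\<lambda>h. (0, h))) (at (snd z))"
    by (rule derivative_eq_intros refl)+ simp
  have E2: "(f has_derivative (\<lambda>h. fst h * A + snd h * B)) (at ((\<lambda>t::real. (fst z, t)) (snd z)))"
    using assms by simp
  have "((\<lambda>t. f (fst z, t)) has_derivative (\<lambda>h. h * B)) (at (snd z))"
    using has_derivative_compose[OF E1 E2] by simp
  moreover have "(\<lambda>h. h * B) = (*) B" by (rule ext) simp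
  ultimately have "((\<lambda>t. f (fst z, t)) has_real_derivative B) (at (snd z))"
    by (simp add: has_field_derivative_def)
  then show "dy f z = B" unfolding dy_def by (rule DERIV_imp_deriv)
qed

lemma dx_psq: "supp N c \<Longrightarrow> dx (psq N c) z = psq N (dxc c) z"
  using dx_dy_of_has_derivative(1)[OF psq_has_derivative] by blast
lemma dy_psq: "supp N c \<Longrightarrow> dy (psq N c) z = psq N (dyc c) z"
  using dx_dy_of_has_derivative(2)[OF psq_has_derivative] by blast

lemma stepA:
  assumes "poly2 k u1" "poly2 k u2" "open S" "z0 \<in> S" "\<And>z. z \<in> S \<Longrightarrow> dx u1 z + dy u2 z = 0"
  shows "\<exists>p. poly2 (k+1) p \<and> (\<forall>y. (p has_derivative (\<lambda>h. fst h * u2 y - snd h * u1 y)) (at y))"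
proof -
  obtain a1 where a1: "\<And>i j. k < i + j \<Longrightarrow> a1 i j = 0" "u1 = psq k a1" using poly2_psq[OF assms(1)] by blast
  obtain a2 where a2: "\<And>i j. k < i + j \<Longrightarrow> a2 i j = 0" "u2 = psq k a2" using poly2_psq[OF assms(2)] by blast
  have s1: "supp k a1" "supp k a2" using supp_tri[of k a1, OF a1(1)] supp_tri[of k a2, OF a2(1)] by auto
  have "\<forall>i\<le>k. \<forall>j\<le>k. (\<lambda>i j. dxc a1 i j + dyc a2 i j) i j = 0"
  proof (rule psq_zero_open[OF assms(3,4)])
    fix z assume "z \<in> S"
    then show "psq k (\<lambda>i j. dxc a1 i j + dyc a2 i j) z = 0"
      using assms(5)[of z] by (simp add: psq_add a1(2) a2(2) dx_psq dy_psq s1)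
  qed
  then have rel: "real (Suc i) * a1 (Suc i) j + real (Suc j) * a2 i (Suc j) = 0" for i j
    apply (cases "i \<le> k \<and> j \<le> k")
    using a1(1)[of "Suc i" j] a2(1)[of i "Suc j"] by (auto simp: dxc_def dyc_def)
  define c where "c i j = (if 0 < i then a2 (i - 1) j / real i else if 0 < j then - a1 0 (j - 1) / real j else 0)" for i j
  have ctri: "c i j = 0" if "k + 1 < i + j" for i j
    using that a1(1)[of 0 "j - 1"] a2(1)[of "i - 1" j] by (auto simp: c_def)
  have sc: "supp (k+1) c" using supp_tri[of "k+1" c, OF ctri] by auto
  have dxc_c: "dxc c = a2" by (auto simp: fun_eq_iff dxc_def c_def)
  have dyc_c: "dyc c = (\<lambda>i j. - a1 i j)"
  proof (intro ext)
    fix i j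
    show "dyc c i j = - a1 i j"
    proof (cases i)
      case 0 then show ?thesis by (simp add: dyc_def c_def)
    next
      case (Suc i')
      have "real (Suc i') * a1 (Suc i') j + real (Suc j) * a2 i' (Suc j) = 0" by (rule rel)
      then show ?thesis unfolding dyc_def c_def Suc
        by (simp add: field_simps del: of_nat_Suc)
    qed
  qed
  have e2: "psq (k+1) a2 = u2" using psq_mono[OF s1(2), of "k+1"] a2(2) by simp
  have e1: "psq (k+1) a1 = u1" using psq_mono[OF s1(1), of "k+1"] a1(2) by simp
  show ?thesis
  proof (intro exI conjI allI)
    show "poly2 (k + 1) (psq (k+1) c)" using psq_poly2[of "k+1" c, OF ctri] by auto
    fix y
    show "(psq (k+1) c has_derivative (\<lambda>h. fst h * u2 y - snd h * u1 y)) (at y)"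
      using psq_has_derivative[OF sc, of y] unfolding dxc_c dyc_c psq_uminus e1 e2
      by simp
  qed
qed


lemma det2_simps: "det2 p q = fst p * snd q - snd p * fst q" by (simp add: det2_def)

lemma det2_scale_left: "det2 (m *\<^sub>R p) q = m * det2 p q" by (simp add: det2_def algebra_simps)
lemma det2_scale_right: "det2 p (m *\<^sub>R q) = m * det2 p q" by (simp add: det2_def algebra_simps)
lemma det2_add_right: "det2 p (q + r) = det2 p q + det2 p r" by (simp add: det2_def algebra_simps)
lemma det2_diff_right: "det2 p (q - r) = det2 p q - det2 p r" by (simp add: det2_def algebra_simps)
lemma det2_add_left: "det2 (q + r) p = det2 q p + det2 r p" by (simp add: det2_def algebra_simps)
lemma det2_diff_left: "det2 (q - r) p = det2 q p - det2 r p" by (simp add: det2_def algebra_simps)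
lemma det2_self: "det2 p p = 0" by (simp add: det2_def)
lemma det2_swap: "det2 p q = - det2 q p" by (simp add: det2_def)
lemma det2_zero[simp]: "det2 0 p = 0" "det2 p 0 = 0" by (simp_all add: det2_def)

lemma det2_parallel:
  assumes "det2 A d = 0" "A \<noteq> 0"
  shows "\<exists>\<mu>. d = \<mu> *\<^sub>R A"
proof -
  obtain a1 a2 d1 d2 where AD: "A = (a1, a2)" "d = (d1, d2)" by fastforce
  have h: "a1 * d2 = a2 * d1" using assms(1) by (simp add: det2_def AD)
  show ?thesis
  proof (cases "a1 = 0")
    case True
    then have "a2 \<noteq> 0" using assms(2) AD by (auto simp: zero_prod_def)
    then show ?thesis using h True by (intro exI[of _ "d2 / a2"]) (auto simp: AD field_simps zero_prod_def)
  next
    case False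
    then show ?thesis using h by (intro exI[of _ "d1 / a1"]) (auto simp: AD field_simps)
  qed
qed

lemma det2_indep_zero:
  assumes "det2 A d = 0" "det2 B d = 0" "det2 A B \<noteq> 0"
  shows "d = 0"
proof -
  obtain a1 a2 b1 b2 d1 d2 where AD: "A = (a1, a2)" "B = (b1,b2)" "d = (d1, d2)" by (metis prod.exhaust)
  have e: "a1 * d2 - a2 * d1 = 0" "b1 * d2 - b2 * d1 = 0" "a1 * b2 - a2 * b1 \<noteq> 0"
    using assms by (auto simp: det2_def AD)
  have "(a1 * b2 - a2 * b1) * d1 = a1 * (b2 * d1 - b1 * d2) + b1 * (a1 * d2 - a2 * d1)" by (simp add: algebra_simps)
  then have "(a1 * b2 - a2 * b1) * d1 = 0" using e(1,2) by simp
  moreover have "(a1 * b2 - a2 * b1) * d2 = b2 * (a1 * d2 - a2 * d1) - a2 * (b1 * d2 - b2 * d1)" by (simp add: algebra_simps)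
  then have "(a1 * b2 - a2 * b1) * d2 = 0" using e(1,2) by simp
  ultimately show ?thesis using e(3) AD by (simp add: zero_prod_def)
qed

lemma tri3_mem:
  fixes P0 P1 P2 p :: "real \<times> real"
  defines "D \<equiv> det2 (P1 - P0) (P2 - P0)"
  assumes DZ: "D \<noteq> 0"
  shows "p \<in> convex hull {P0, P1, P2} \<longleftrightarrow>
    (0 \<le> D * det2 (P2 - P1) (p - P1) \<and> 0 \<le> D * det2 (P0 - P2) (p - P2) \<and> 0 \<le> D * det2 (P1 - P0) (p - P0))"
proof -
  obtain x0 y0 x1 y1 x2 y2 x y where P: "P0 = (x0,y0)" "P1 = (x1,y1)" "P2 = (x2,y2)" "p = (x,y)"
    by (metis prod.exhaust)
  have Dv: "D = (x1 - x0) * (y2 - y0) - (y1 - y0) * (x2 - x0)" by (simp add: D_def det2_def P)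
  define e0 where "e0 = (x2 - x1) * (y - y1) - (y2 - y1) * (x - x1)"
  define e1 where "e1 = (x0 - x2) * (y - y2) - (y0 - y2) * (x - x2)"
  define e2 where "e2 = (x1 - x0) * (y - y0) - (y1 - y0) * (x - x0)"
  have E: "det2 (P2 - P1) (p - P1) = e0" "det2 (P0 - P2) (p - P2) = e1" "det2 (P1 - P0) (p - P0) = e2"
    by (simp_all add: det2_def P e0_def e1_def e2_def)
  have sum: "e0 + e1 + e2 = D" unfolding Dv e0_def e1_def e2_def by algebra
  have cx: "e0 * x0 + e1 * x1 + e2 * x2 = D * x" unfolding Dv e0_def e1_def e2_def by algebra
  have cy: "e0 * y0 + e1 * y1 + e2 * y2 = D * y" unfolding Dv e0_def e1_def e2_def by algebra
  show ?thesis
  proof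
    assume "p \<in> convex hull {P0, P1, P2}"
    then obtain u v w where uvw: "0 \<le> u" "0 \<le> v" "0 \<le> w" "u + v + w = 1" "p = u *\<^sub>R P0 + v *\<^sub>R P1 + w *\<^sub>R P2"
      unfolding convex_hull_3 by blast
    have xy: "x = u * x0 + v * x1 + w * x2" "y = u * y0 + v * y1 + w * y2" using uvw(5) by (simp_all add: P)
    have w1: "u = 1 - v - w" using uvw(4) by simp
    have "e0 = u * D" "e1 = v * D" "e2 = w * D"
      unfolding e0_def e1_def e2_def Dv xy w1 by algebra+
    then show "0 \<le> D * det2 (P2 - P1) (p - P1) \<and> 0 \<le> D * det2 (P0 - P2) (p - P2) \<and> 0 \<le> D * det2 (P1 - P0) (p - P0)"
      using uvw(1-3) unfolding E by (simp add: mult.left_commute[of D])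
  next
    assume a: "0 \<le> D * det2 (P2 - P1) (p - P1) \<and> 0 \<le> D * det2 (P0 - P2) (p - P2) \<and> 0 \<le> D * det2 (P1 - P0) (p - P0)"
    have nn: "0 \<le> e / D" if "0 \<le> D * e" for e
      using that by (auto simp: zero_le_divide_iff zero_le_mult_iff)
    have "p = (e0 / D) *\<^sub>R P0 + (e1 / D) *\<^sub>R P1 + (e2 / D) *\<^sub>R P2"
    proof -
      have "x = (e0 / D) * x0 + (e1 / D) * x1 + (e2 / D) * x2"
        using cx DZ by (simp add: field_simps)
      moreover have "y = (e0 / D) * y0 + (e1 / D) * y1 + (e2 / D) * y2"
        using cy DZ by (simp add: field_simps)
      ultimately show ?thesis by (simp add: P)
    qed
    moreover have "e0 / D + e1 / D + e2 / D = 1" using sum DZ by (simp add: field_simps)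
    moreover have "0 \<le> e0 / D" "0 \<le> e1 / D" "0 \<le> e2 / D" using a nn unfolding E by auto
    ultimately show "p \<in> convex hull {P0, P1, P2}"
      unfolding convex_hull_3 by blast
  qed
qed


lemma det2_bound: "\<bar>det2 p q\<bar> \<le> norm p * norm q"
proof -
  have "det2 p q = inner p (snd q, - fst q)" by (simp add: det2_def inner_prod_def)
  moreover have "norm (snd q, - fst q) = norm q"
    by (simp add: norm_prod_def add.commute)
  ultimately show ?thesis using Cauchy_Schwarz_ineq2[of p "(snd q, - fst q)"] by simp
qed

locale tm =
  fixes a b :: "real \<times> real" and V :: "'c::finite \<Rightarrow> nat \<Rightarrow> real \<times> real"
  assumes mesh: "torus_mesh a b V"
begin

abbreviation "L \<equiv> lattice a b"

lemma detab: "det2 a b \<noteq> 0" using mesh by (simp add: torus_mesh_def)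
lemma nondeg: "det2 (V c 1 - V c 0) (V c 2 - V c 0) \<noteq> 0" using mesh by (simp add: torus_mesh_def)
lemma cover: "\<exists>c l. l \<in> L \<and> x \<in> cell V c l"
proof -
  have "x \<in> (\<Union>c. \<Union>l\<in>L. cell V c l)" using conjunct1[OF conjunct2[OF conjunct2[OF mesh[unfolded torus_mesh_def]]]] by simp
  then show ?thesis by blast
qed
lemma conform:
  assumes "l \<in> L" "l' \<in> L" "(c, l) \<noteq> (c', l')"
  shows "cell V c l \<inter> cell V c' l' = {} \<or>
     (\<exists>v. v \<in> verts V c l \<and> v \<in> verts V c' l' \<and> cell V c l \<inter> cell V c' l' = {v}) \<or>
     (\<exists>v w. v \<noteq> w \<and> v \<in> verts V c l \<and> v \<in> verts V c' l' \<and> w \<in> verts V c l \<and> w \<in> verts V c' l' \<and>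
        cell V c l \<inter> cell V c' l' = closed_segment v w)"
  using conjunct2[OF conjunct2[OF conjunct2[OF mesh[unfolded torus_mesh_def]]], rule_format, where c=c and c'=c' and l=l and l'=l',
     OF conjI[OF assms(1) conjI[OF assms(2) assms(3)]], unfolded Let_def] .

lemma L_iff: "l \<in> L \<longleftrightarrow> (\<exists>m n. l = of_int m *\<^sub>R a + of_int n *\<^sub>R b)"
  unfolding lattice_def by blast
lemma L0: "0 \<in> L" unfolding L_iff by (rule exI[of _ 0], rule exI[of _ 0]) simp
lemma Ladd: assumes "l \<in> L" "l' \<in> L" shows "l + l' \<in> L"
proof -
  obtain m n where 1: "l = of_int m *\<^sub>R a + of_int n *\<^sub>R b" using assms(1) unfolding L_iff by auto
  obtain m' n' where 2: "l' = of_int m' *\<^sub>R a + of_int n' *\<^sub>R b" using assms(2) unfolding L_iff by auto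
  have "l + l' = of_int (m + m') *\<^sub>R a + of_int (n + n') *\<^sub>R b" unfolding 1 2 by (simp add: algebra_simps)
  then show ?thesis unfolding L_iff by (intro exI)
qed
lemma Lneg: assumes "l \<in> L" shows "- l \<in> L"
proof -
  obtain m n where 1: "l = of_int m *\<^sub>R a + of_int n *\<^sub>R b" using assms(1) unfolding L_iff by auto
  have "- l = of_int (- m) *\<^sub>R a + of_int (- n) *\<^sub>R b" unfolding 1 by (simp add: algebra_simps)
  then show ?thesis unfolding L_iff by (intro exI)
qed
lemma Ldiff: assumes "l \<in> L" "l' \<in> L" shows "l - l' \<in> L"
proof -
  have "l + (- l') \<in> L" by (rule Ladd[OF assms(1) Lneg[OF assms(2)]])
  then show ?thesis by (simp only: diff_conv_add_uminus)
qed

lemma tri_eq: "tri V c = convex hull {V c 0, V c 1, V c 2}"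
  by (simp add: tri_def)

lemma cell_eq: "cell V c l = convex hull {V c 0 + l, V c 1 + l, V c 2 + l}"
proof -
  have "cell V c l = (\<lambda>x. l + x) ` (convex hull {V c 0, V c 1, V c 2})"
    by (simp add: cell_def tri_def add.commute)
  also have "\<dots> = convex hull ((\<lambda>x. l + x) ` {V c 0, V c 1, V c 2})"
    by (rule convex_hull_translation[symmetric])
  finally show ?thesis by (simp add: add.commute)
qed

lemma verts_eq: "verts V c l = {V c 0 + l, V c 1 + l, V c 2 + l}"
  by (simp add: verts_def)

lemma cell0: "cell V c 0 = tri V c" by (simp add: cell_def)

lemma cell_compact: "compact (cell V c l)"
  unfolding cell_eq by (rule finite_imp_compact_convex_hull) simp
lemma cell_closed: "closed (cell V c l)" using cell_compact compact_imp_closed by blast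
lemma cell_convex: "convex (cell V c l)" unfolding cell_eq by simp
lemma tri_convex: "convex (tri V c)" unfolding tri_eq by simp
lemma tri_compact: "compact (tri V c)" unfolding tri_eq by (rule finite_imp_compact_convex_hull) simp

lemma vert_in_cell: assumes "i < 3" shows "V c i + l \<in> cell V c l"
proof -
  have "i = 0 \<or> i = 1 \<or> i = 2" using assms by linarith
  then show ?thesis
    unfolding cell_eq using hull_subset[of "{V c 0 + l, V c 1 + l, V c 2 + l}" convex] by blast
qed

lemma verts_sub: "verts V c l \<subseteq> cell V c l"
  using vert_in_cell[of 0 c l] vert_in_cell[of 1 c l] vert_in_cell[of 2 c l] by (auto simp: verts_eq)

lemma cell_translate: "cell V c (l + m) = (\<lambda>x. x + m) ` cell V c l"
  by (auto simp: cell_def image_image add.assoc)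

lemma mem_cell_translate: "x \<in> cell V c l \<longleftrightarrow> x - l \<in> tri V c"
  unfolding cell_def by (auto intro: image_eqI[of _ _ "x - l"])

lemma bounded_tris: "\<exists>M. \<forall>c. \<forall>x\<in>tri V c. norm x \<le> M"
proof -
  have "compact (\<Union>c. tri V c)" by (intro compact_UN tri_compact) simp
  then have "bounded (\<Union>c. tri V c)" by (rule compact_imp_bounded)
  then show ?thesis unfolding bounded_iff by blast
qed

lemma lattice_finite: "finite (L \<inter> cball 0 B)"
proof -
  define D where "D = det2 a b"
  have D: "D \<noteq> 0" using detab by (simp add: D_def)
  define K where "K = ceiling (B * (norm a + norm b) / \<bar>D\<bar>)"
  have sub: "L \<inter> cball 0 B \<subseteq> (\<lambda>(m, n). of_int m *\<^sub>R a + of_int n *\<^sub>R b) ` ({-K..K} \<times> {-K..K})"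
  proof
    fix l assume l: "l \<in> L \<inter> cball 0 B"
    then obtain m n :: int where lmn: "l = of_int m *\<^sub>R a + of_int n *\<^sub>R b" unfolding lattice_def by blast
    have nl: "norm l \<le> B" using l by simp
    have B0: "0 \<le> B" using nl norm_ge_zero[of l] by linarith
    have dm: "det2 l b = of_int m * D" unfolding lmn D_def by (simp add: det2_def algebra_simps)
    have dn: "det2 a l = of_int n * D" unfolding lmn D_def by (simp add: det2_def algebra_simps)
    have "\<bar>of_int m * D\<bar> \<le> B * (norm a + norm b)"
    proof -
      have "\<bar>of_int m * D\<bar> \<le> norm l * norm b" using det2_bound[of l b] dm by simp
      also have "\<dots> \<le> B * norm b" using nl by (simp add: mult_right_mono)
      also have "\<dots> \<le> B * (norm a + norm b)"
        using B0 by (intro mult_left_mono) auto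
      finally show ?thesis .
    qed
    then have "\<bar>real_of_int m\<bar> \<le> B * (norm a + norm b) / \<bar>D\<bar>" using D by (simp add: abs_mult field_simps)
    then have mK: "\<bar>m\<bar> \<le> K" unfolding K_def by linarith
    have "\<bar>of_int n * D\<bar> \<le> B * (norm a + norm b)"
    proof -
      have "\<bar>of_int n * D\<bar> \<le> norm a * norm l" using det2_bound[of a l] dn by simp
      also have "\<dots> \<le> norm a * B" using nl by (simp add: mult_left_mono)
      also have "\<dots> \<le> B * (norm a + norm b)"
        using B0 by (simp add: algebra_simps)
      finally show ?thesis .
    qed
    then have "\<bar>real_of_int n\<bar> \<le> B * (norm a + norm b) / \<bar>D\<bar>" using D by (simp add: abs_mult field_simps)
    then have nK: "\<bar>n\<bar> \<le> K" unfolding K_def by linarith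
    show "l \<in> (\<lambda>(m, n). of_int m *\<^sub>R a + of_int n *\<^sub>R b) ` ({-K..K} \<times> {-K..K})"
      using mK nK lmn by (intro image_eqI[of _ _ "(m, n)"]) auto
  qed
  show ?thesis by (rule finite_subset[OF sub]) simp
qed

lemma local_finite: "finite {(c, l). l \<in> L \<and> cell V c l \<inter> cball z R \<noteq> {}}"
proof -
  obtain M where M: "\<And>c x. x \<in> tri V c \<Longrightarrow> norm x \<le> M" using bounded_tris by blast
  have "{(c, l). l \<in> L \<and> cell V c l \<inter> cball z R \<noteq> {}} \<subseteq> UNIV \<times> (L \<inter> cball 0 (norm z + R + M))"
  proof (rule subsetI)
    fix p assume "p \<in> {(c, l). l \<in> L \<and> cell V c l \<inter> cball z R \<noteq> {}}"
    then obtain c l x where p: "p = (c, l)" and l: "l \<in> L" and x: "x \<in> cell V c l" "x \<in> cball z R" by blast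
    have "x - l \<in> tri V c" using x mem_cell_translate by blast
    then have "norm (x - l) \<le> M" by (rule M)
    moreover have "norm (x - z) \<le> R" using x by (simp add: dist_norm norm_minus_commute)
    moreover have "norm l \<le> norm (x - l) + norm (x - z) + norm z"
    proof -
      have "l = x - (x - l)" by simp
      then have t1: "norm l \<le> norm x + norm (x - l)" by (metis norm_triangle_ineq4)
      have "x = (x - z) + z" by simp
      then have t2: "norm x \<le> norm (x - z) + norm z" by (metis norm_triangle_ineq)
      show ?thesis using t1 t2 by linarith
    qed
    ultimately show "p \<in> UNIV \<times> (L \<inter> cball 0 (norm z + R + M))" using l p by (simp add: mem_cball_0)
  qed
  then show ?thesis by (rule finite_subset) (simp add: lattice_finite)
qed

end


context tm begin

definition W :: "'c \<Rightarrow> real \<times> real \<Rightarrow> nat \<Rightarrow> real \<times> real" where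
  "W c l i = V c i + l"

definition Dc :: "'c \<Rightarrow> real" where
  "Dc c = det2 (V c 1 - V c 0) (V c 2 - V c 0)"

lemma Dc_nz: "Dc c \<noteq> 0" using nondeg by (simp add: Dc_def)

lemma mem_cell_iff:
  "x \<in> cell V c l \<longleftrightarrow>
    (0 \<le> Dc c * det2 (W c l 2 - W c l 1) (x - W c l 1) \<and>
     0 \<le> Dc c * det2 (W c l 0 - W c l 2) (x - W c l 2) \<and>
     0 \<le> Dc c * det2 (W c l 1 - W c l 0) (x - W c l 0))"
proof -
  have D: "det2 (W c l 1 - W c l 0) (W c l 2 - W c l 0) = Dc c" by (simp add: W_def Dc_def)
  have ce: "cell V c l = convex hull {W c l 0, W c l 1, W c l 2}" by (simp add: cell_eq W_def)
  have T: "x \<in> convex hull {W c l 0, W c l 1, W c l 2} \<longleftrightarrow>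
    (0 \<le> Dc c * det2 (W c l 2 - W c l 1) (x - W c l 1) \<and>
     0 \<le> Dc c * det2 (W c l 0 - W c l 2) (x - W c l 2) \<and>
     0 \<le> Dc c * det2 (W c l 1 - W c l 0) (x - W c l 0))"
    using tri3_mem[of "W c l 1" "W c l 0" "W c l 2" x] Dc_nz[of c] unfolding D by blast
  show ?thesis unfolding ce by (rule T)
qed

lemma star: "\<exists>r>0. \<forall>c l. l \<in> L \<longrightarrow> cell V c l \<inter> ball z r \<noteq> {} \<longrightarrow> z \<in> cell V c l"
proof -
  define S where "S = {(c, l). l \<in> L \<and> cell V c l \<inter> cball z 1 \<noteq> {}}"
  have fS: "finite S" unfolding S_def by (rule local_finite)
  define T where "T = (\<Union>p\<in>{p\<in>S. z \<notin> cell V (fst p) (snd p)}. cell V (fst p) (snd p))"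
  have "closed T" unfolding T_def using fS by (intro closed_UN) (simp_all add: cell_closed)
  moreover have "z \<notin> T" unfolding T_def by auto
  ultimately obtain \<rho> where \<rho>: "\<rho> > 0" "ball z \<rho> \<subseteq> - T"
    using open_contains_ball[of "- T"] by (auto simp: open_Compl)
  define r where "r = min \<rho> 1"
  have r: "r > 0" using \<rho> by (simp add: r_def)
  show ?thesis
  proof (intro exI[of _ r] conjI allI impI r)
    fix c l assume l: "l \<in> L" and ne: "cell V c l \<inter> ball z r \<noteq> {}"
    then obtain x where x: "x \<in> cell V c l" "x \<in> ball z r" by blast
    have "x \<in> cball z 1" using x(2) by (auto simp: r_def)
    then have inS: "(c, l) \<in> S" unfolding S_def using l x(1) by blast
    show "z \<in> cell V c l"
    proof (rule ccontr)
      assume "z \<notin> cell V c l"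
      then have "x \<in> T" unfolding T_def using inS x(1) by (intro UN_I[of "(c, l)"]) auto
      moreover have "x \<in> ball z \<rho>" using x(2) by (auto simp: r_def)
      ultimately show False using \<rho>(2) by blast
    qed
  qed
qed

lemma Fz_finite: "finite {(c, l). l \<in> L \<and> z \<in> cell V c l}"
  by (rule finite_subset[OF _ local_finite[of z 0]]) auto

lemma interior_tri_ne: "\<exists>x. x \<in> interior (tri V c)"
proof -
  define P0 where "P0 = V c 0"
  define P1 where "P1 = V c 1"
  define P2 where "P2 = V c 2"
  define D where "D = det2 (P1 - P0) (P2 - P0)"
  have DZ: "D \<noteq> 0" using Dc_nz[of c] by (simp add: D_def Dc_def P0_def P1_def P2_def)
  define Op where "Op = {p. 0 < D * det2 (P2 - P1) (p - P1) \<and> 0 < D * det2 (P0 - P2) (p - P2) \<and> 0 < D * det2 (P1 - P0) (p - P0)}"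
  have "open Op" unfolding Op_def det2_def
    by (intro open_Collect_conj open_Collect_less continuous_intros)
  moreover have "Op \<subseteq> tri V c"
  proof
    fix p assume "p \<in> Op"
    then have "0 \<le> D * det2 (P2 - P1) (p - P1) \<and> 0 \<le> D * det2 (P0 - P2) (p - P2) \<and> 0 \<le> D * det2 (P1 - P0) (p - P0)"
      by (auto simp: Op_def less_imp_le)
    then have "p \<in> convex hull {P0, P1, P2}" using tri3_mem[of P1 P0 P2 p, folded D_def] DZ by blast
    then show "p \<in> tri V c" unfolding tri_eq P0_def P1_def P2_def .
  qed
  ultimately have sub: "Op \<subseteq> interior (tri V c)" by (rule interior_maximal[rotated])
  define g where "g = (1/3) *\<^sub>R (P0 + P1 + P2)"
  obtain x0 y0 x1 y1 x2 y2 where P: "P0 = (x0,y0)" "P1 = (x1,y1)" "P2 = (x2,y2)" by (metis prod.exhaust)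
  have Dv: "D = (x1 - x0) * (y2 - y0) - (y1 - y0) * (x2 - x0)" by (simp add: D_def det2_def P)
  have E: "det2 (P2 - P1) (g - P1) = D / 3" "det2 (P0 - P2) (g - P2) = D / 3" "det2 (P1 - P0) (g - P0) = D / 3"
    unfolding Dv by (simp_all add: g_def P det2_def field_simps)
  have pos: "0 < D * (D / 3)" using DZ by (cases "D > 0") (auto simp: zero_less_mult_iff)
  have "g \<in> Op" unfolding Op_def mem_Collect_eq E using pos by simp
  then show ?thesis using sub by blast
qed

end


lemma seg_param: "x \<in> closed_segment v w \<longleftrightarrow> (\<exists>s. 0 \<le> s \<and> s \<le> 1 \<and> x = v + s *\<^sub>R (w - v))"
  unfolding in_segment by (simp add: algebra_simps)

lemma seg_translate: "x \<in> closed_segment (v - l) (w - l) \<longleftrightarrow> x + l \<in> closed_segment v w"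
  unfolding seg_param by (auto simp: algebra_simps)

lemma inner_edge_normal:
  assumes "v \<noteq> w"
  shows "inner U (edge_normal v w) = - det2 (w - v) U / norm (w - v)"
proof -
  have N: "norm (w - v) \<noteq> 0" using assms by simp
  show ?thesis using N by (simp add: edge_normal_def inner_prod_def det2_def field_simps)
qed

locale dk = tm a b V for a b and V :: "'c::finite \<Rightarrow> nat \<Rightarrow> real \<times> real" +
  fixes k :: nat and u :: "'c \<Rightarrow> real \<times> real \<Rightarrow> real \<times> real"
  assumes dk: "div_kernel a b V k u"
begin

lemma dPk_u: "dPk k u" using dk by (simp add: div_kernel_def)
lemma divfree: "x \<in> interior (tri V c) \<Longrightarrow> divg (u c) x = 0" using dk by (simp add: div_kernel_def)
lemma jump0:
  assumes "l \<in> L" "(c, 0) \<noteq> (c', l)" "v \<noteq> w" "tri V c \<inter> cell V c' l = closed_segment v w" "x \<in> closed_segment v w"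
  shows "inner (u c' (x - l)) (edge_normal v w) - inner (u c x) (edge_normal v w) = 0"
  using dk assms unfolding div_kernel_def by blast

lemma P_exists: "\<exists>p. poly2 (k+1) p \<and> (\<forall>y. (p has_derivative (\<lambda>h. det2 h (u c y))) (at y))"
proof -
  obtain z0 where z0: "z0 \<in> interior (tri V c)" using interior_tri_ne by blast
  have "poly2 k (\<lambda>z. fst (u c z))" "poly2 k (\<lambda>z. snd (u c z))" using dPk_u by (auto simp: dPk_def)
  from stepA[OF this open_interior z0] divfree[of _ c]
  obtain p where "poly2 (k+1) p" "\<And>y. (p has_derivative (\<lambda>h. fst h * snd (u c y) - snd h * fst (u c y))) (at y)"
    unfolding divg_def by blast
  then show ?thesis by (intro exI[of _ p]) (simp add: det2_def)
qed

definition P :: "'c \<Rightarrow> real \<times> real \<Rightarrow> real" where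
  "P c = (SOME p. poly2 (k+1) p \<and> (\<forall>y. (p has_derivative (\<lambda>h. det2 h (u c y))) (at y)))"

lemma P_poly: "poly2 (k+1) (P c)" and P_deriv: "(P c has_derivative (\<lambda>h. det2 h (u c y))) (at y)"
  using someI_ex[OF P_exists[of c]] unfolding P_def[symmetric] by blast+

definition Q :: "'c \<Rightarrow> real \<times> real \<Rightarrow> real \<times> real \<Rightarrow> real" where
  "Q c l x = P c (x - l)"

lemma Q_deriv: "(Q c l has_derivative (\<lambda>h. det2 h (u c (x - l)))) (at x)"
proof -
  have "((\<lambda>x. x - l) has_derivative (\<lambda>h. h)) (at x)" by (rule derivative_eq_intros refl)+ simp
  from has_derivative_compose[OF this P_deriv[of c "x - l"]] show ?thesis
    by (simp add: Q_def[abs_def])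
qed

lemma Q_cont: "continuous_on S (Q c l)"
  by (rule continuous_at_imp_continuous_on) (use has_derivative_continuous[OF Q_deriv] in blast)

lemma jumpW:
  assumes l: "l \<in> L" "l' \<in> L" and ne: "(c, l) \<noteq> (c', l')" and vw: "v \<noteq> w"
    and S: "cell V c l \<inter> cell V c' l' = closed_segment v w" and y: "y \<in> closed_segment v w"
  shows "det2 (w - v) (u c (y - l)) = det2 (w - v) (u c' (y - l'))"
proof -
  have S': "tri V c \<inter> cell V c' (l' - l) = closed_segment (v - l) (w - l)"
  proof (intro set_eqI)
    fix x
    have "x \<in> tri V c \<longleftrightarrow> x + l \<in> cell V c l" by (simp add: mem_cell_translate)
    moreover have "x \<in> cell V c' (l' - l) \<longleftrightarrow> x + l \<in> cell V c' l'" by (simp add: mem_cell_translate algebra_simps)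
    ultimately show "x \<in> tri V c \<inter> cell V c' (l' - l) \<longleftrightarrow> x \<in> closed_segment (v - l) (w - l)"
      using S seg_translate by blast
  qed
  have ne': "(c, 0) \<noteq> (c', l' - l)" using ne by auto
  have "y - l \<in> closed_segment (v - l) (w - l)" using y seg_translate[of "y - l" v l w] by simp
  from jump0[OF Ldiff[OF l(2) l(1)] ne' _ S' this] vw
  have "inner (u c' (y - l')) (edge_normal (v - l) (w - l)) - inner (u c (y - l)) (edge_normal (v - l) (w - l)) = 0"
    by (simp add: algebra_simps)
  moreover have "edge_normal (v - l) (w - l) = edge_normal v w" by (simp add: edge_normal_def)
  moreover have "norm (w - v) \<noteq> 0" using vw by simp
  ultimately show ?thesis using vw by (simp add: inner_edge_normal field_simps)
qed

lemma Qconst: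
  assumes l: "l \<in> L" "l' \<in> L" and ne: "(c, l) \<noteq> (c', l')" and vw: "v \<noteq> w"
    and S: "cell V c l \<inter> cell V c' l' = closed_segment v w"
    and x: "x \<in> closed_segment v w" and y: "y \<in> closed_segment v w"
  shows "Q c l x - Q c' l' x = Q c l y - Q c' l' y"
proof -
  define g where "g s = v + s *\<^sub>R (w - v)" for s :: real
  define f where "f s = Q c l (g s) - Q c' l' (g s)" for s
  have gD: "(g has_derivative (\<lambda>h. h *\<^sub>R (w - v))) (at s)" for s
    unfolding g_def[abs_def] by (rule derivative_eq_intros refl)+ simp
  have fD: "(f has_derivative (\<lambda>h. det2 (h *\<^sub>R (w - v)) (u c (g s - l)) - det2 (h *\<^sub>R (w - v)) (u c' (g s - l')))) (at s)" for s
    unfolding f_def[abs_def]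
    by (intro has_derivative_diff has_derivative_compose[OF gD Q_deriv, unfolded o_def])
  have "\<exists>C. \<forall>s\<in>{0..1}. f s = C"
  proof (rule has_derivative_zero_constant)
    fix s :: real assume s: "s \<in> {0..1}"
    have "g s \<in> closed_segment v w" unfolding seg_param g_def using s by auto
    then have "det2 (w - v) (u c (g s - l)) = det2 (w - v) (u c' (g s - l'))" by (rule jumpW[OF l ne vw S])
    then have "(\<lambda>h. det2 (h *\<^sub>R (w - v)) (u c (g s - l)) - det2 (h *\<^sub>R (w - v)) (u c' (g s - l'))) = (\<lambda>h. 0)"
      by (simp add: det2_scale_left)
    then show "(f has_derivative (\<lambda>h. 0)) (at s within {0..1})"
      using has_derivative_at_withinI[OF fD[of s]] by simp
  qed simp
  then obtain C where C: "\<And>s. s \<in> {0..1} \<Longrightarrow> f s = C" by blast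
  obtain sx sy where "sx \<in> {0..1}" "x = g sx" "sy \<in> {0..1}" "y = g sy" using x y unfolding seg_param g_def by auto
  then show ?thesis using C[of sx] C[of sy] unfolding f_def by simp
qed

lemma shared:
  assumes l: "l \<in> L" "l' \<in> L" and x: "x \<in> cell V c l" "x \<in> cell V c' l'" and y: "y \<in> cell V c l" "y \<in> cell V c' l'"
  shows "Q c l x - Q c l y = Q c' l' x - Q c' l' y"
proof (cases "(c, l) = (c', l')")
  case True then show ?thesis by simp
next
  case False
  from conform[OF l False] show ?thesis
  proof (elim disjE exE conjE)
    assume "cell V c l \<inter> cell V c' l' = {}" then show ?thesis using x by blast
  next
    fix v assume "cell V c l \<inter> cell V c' l' = {v}"
    then have "x = y" using x y by (metis IntI singletonD)
    then show ?thesis by simp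
  next
    fix v w assume vw: "v \<noteq> w" and S: "cell V c l \<inter> cell V c' l' = closed_segment v w"
    have "x \<in> closed_segment v w" "y \<in> closed_segment v w" using x y S by blast+
    from Qconst[OF l False vw S this] show ?thesis by simp
  qed
qed

end


lemma aff_nonneg:
  fixes A B t :: real
  assumes "(B = 0 \<and> 0 \<le> A) \<or> 0 < A"
  shows "\<exists>e>0. \<forall>s. \<bar>s - t\<bar> < e \<longrightarrow> 0 \<le> A + (s - t) * B"
proof (cases "B = 0")
  case True then show ?thesis using assms by (intro exI[of _ 1]) auto
next
  case False
  then have A: "0 < A" using assms by auto
  show ?thesis
  proof (intro exI[of _ "A / \<bar>B\<bar>"] conjI allI impI)
    show "0 < A / \<bar>B\<bar>" using A False by simp
    fix s assume "\<bar>s - t\<bar> < A / \<bar>B\<bar>"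
    then have "\<bar>s - t\<bar> * \<bar>B\<bar> < A" using False by (simp add: field_simps)
    moreover have "- ((s - t) * B) \<le> \<bar>s - t\<bar> * \<bar>B\<bar>" by (simp add: abs_mult[symmetric])
    ultimately show "0 \<le> A + (s - t) * B" by linarith
  qed
qed

context dk begin

definition rad :: "real \<times> real \<Rightarrow> real" where
  "rad z = (SOME r. r > 0 \<and> (\<forall>c l. l \<in> L \<longrightarrow> cell V c l \<inter> ball z r \<noteq> {} \<longrightarrow> z \<in> cell V c l))"

lemma rad: "rad z > 0" "\<And>c l. l \<in> L \<Longrightarrow> cell V c l \<inter> ball z (rad z) \<noteq> {} \<Longrightarrow> z \<in> cell V c l"
  using someI_ex[OF star[of z]] unfolding rad_def[symmetric] by blast+

lemma rad_star: "l \<in> L \<Longrightarrow> x \<in> cell V c l \<Longrightarrow> x \<in> ball z (rad z) \<Longrightarrow> z \<in> cell V c l"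
  using rad(2) by blast

lemma ball_cells: "x \<in> ball z (rad z) \<Longrightarrow> \<exists>c l. l \<in> L \<and> x \<in> cell V c l \<and> z \<in> cell V c l"
  using cover[of x] rad_star by blast

definition Psi :: "real \<times> real \<Rightarrow> real \<times> real \<Rightarrow> real" where
  "Psi z x = (let p = SOME p. snd p \<in> L \<and> z \<in> cell V (fst p) (snd p) \<and> x \<in> cell V (fst p) (snd p)
              in Q (fst p) (snd p) x - Q (fst p) (snd p) z)"

lemma Psi_eq:
  assumes "l \<in> L" "z \<in> cell V c l" "x \<in> cell V c l"
  shows "Psi z x = Q c l x - Q c l z"
proof -
  have ex: "\<exists>p. snd p \<in> L \<and> z \<in> cell V (fst p) (snd p) \<and> x \<in> cell V (fst p) (snd p)"
    using assms by (intro exI[of _ "(c, l)"]) simp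
  define p where "p = (SOME p. snd p \<in> L \<and> z \<in> cell V (fst p) (snd p) \<and> x \<in> cell V (fst p) (snd p))"
  have p: "snd p \<in> L" "z \<in> cell V (fst p) (snd p)" "x \<in> cell V (fst p) (snd p)"
    using someI_ex[OF ex] unfolding p_def[symmetric] by auto
  have "Psi z x = Q (fst p) (snd p) x - Q (fst p) (snd p) z" unfolding Psi_def p_def Let_def ..
  also have "\<dots> = Q c l x - Q c l z" using shared[OF p(1) assms(1) p(3) assms(3) p(2) assms(2)] .
  finally show ?thesis .
qed

lemma Psi_cont: "continuous_on (ball z (rad z)) (Psi z)"
proof -
  define F where "F = {(c, l). l \<in> L \<and> z \<in> cell V c l}"
  have fF: "finite F" unfolding F_def by (rule Fz_finite)
  have "continuous_on (\<Union>p\<in>F. cell V (fst p) (snd p)) (Psi z)"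
  proof (rule continuous_on_closed_Union[OF fF])
    fix p assume p: "p \<in> F"
    show "closed (cell V (fst p) (snd p))" by (rule cell_closed)
    have "continuous_on (cell V (fst p) (snd p)) (\<lambda>x. Q (fst p) (snd p) x - Q (fst p) (snd p) z)"
      by (intro continuous_on_diff Q_cont continuous_on_const)
    moreover have pp: "snd p \<in> L" "z \<in> cell V (fst p) (snd p)" using p by (auto simp: F_def)
    ultimately show "continuous_on (cell V (fst p) (snd p)) (Psi z)"
      using Psi_eq[OF pp] by (simp add: continuous_on_eq)
  qed
  moreover have "ball z (rad z) \<subseteq> (\<Union>p\<in>F. cell V (fst p) (snd p))"
  proof
    fix x assume "x \<in> ball z (rad z)"
    then obtain c l where "l \<in> L" "x \<in> cell V c l" "z \<in> cell V c l" using ball_cells by blast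
    then show "x \<in> (\<Union>p\<in>F. cell V (fst p) (snd p))" unfolding F_def by (intro UN_I[of "(c, l)"]) auto
  qed
  ultimately show ?thesis by (rule continuous_on_subset)
qed

definition cellof :: "real \<times> real \<Rightarrow> 'c \<times> (real \<times> real)" where
  "cellof x = (SOME p. snd p \<in> L \<and> x \<in> cell V (fst p) (snd p))"

lemma cellof: "snd (cellof x) \<in> L" "x \<in> cell V (fst (cellof x)) (snd (cellof x))"
proof -
  have "\<exists>p. snd p \<in> L \<and> x \<in> cell V (fst p) (snd p)" using cover[of x] by auto
  from someI_ex[OF this] show "snd (cellof x) \<in> L" "x \<in> cell V (fst (cellof x)) (snd (cellof x))"
    unfolding cellof_def[symmetric] by auto
qed

definition U :: "real \<times> real \<Rightarrow> real \<times> real" where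
  "U x = u (fst (cellof x)) (x - snd (cellof x))"

definition hh :: "real \<times> real \<Rightarrow> real \<times> real \<Rightarrow> real \<Rightarrow> real" where
  "hh p q t = det2 (q - p) (U (p + t *\<^sub>R (q - p)))"

definition X :: "real \<times> real \<Rightarrow> real \<times> real \<Rightarrow> real \<times> real \<Rightarrow> real set" where
  "X z p q = (\<Union>cl\<in>{(c, l). l \<in> L \<and> z \<in> cell V c l}. \<Union>i\<in>{..<3}. \<Union>j\<in>{..<3}.
      {s. det2 (W (fst cl) (snd cl) j - W (fst cl) (snd cl) i) (p + s *\<^sub>R (q - p) - W (fst cl) (snd cl) i) = 0 \<and>
          det2 (W (fst cl) (snd cl) j - W (fst cl) (snd cl) i) (q - p) \<noteq> 0})"

lemma lin_root_finite: "finite {s::real. det2 E (p + s *\<^sub>R d - w) = 0 \<and> det2 E d \<noteq> 0}"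
proof -
  have "{s::real. det2 E (p + s *\<^sub>R d - w) = 0 \<and> det2 E d \<noteq> 0} \<subseteq> {- det2 E (p - w) / det2 E d}"
  proof
    fix s assume "s \<in> {s::real. det2 E (p + s *\<^sub>R d - w) = 0 \<and> det2 E d \<noteq> 0}"
    then have "det2 E (p - w) + s * det2 E d = 0" "det2 E d \<noteq> 0"
      by (auto simp: det2_def algebra_simps)
    then show "s \<in> {- det2 E (p - w) / det2 E d}" by (simp add: field_simps)
  qed
  then show ?thesis by (rule finite_subset) simp
qed

lemma X_finite: "finite (X z p q)"
  unfolding X_def using Fz_finite lin_root_finite by (intro finite_UN_I) auto

lemma local_in_cell:
  assumes t: "t \<notin> X z p q" and l: "l \<in> L" and zc: "z \<in> cell V c l" and xc: "p + t *\<^sub>R (q - p) \<in> cell V c l"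
  shows "\<exists>e>0. \<forall>s. \<bar>s - t\<bar> < e \<longrightarrow> p + s *\<^sub>R (q - p) \<in> cell V c l"
proof -
  have edge: "\<exists>e>0. \<forall>s. \<bar>s - t\<bar> < e \<longrightarrow> 0 \<le> Dc c * det2 (W c l j - W c l i) (p + s *\<^sub>R (q - p) - W c l i)"
    if ij: "i < 3" "j < 3" and nn: "0 \<le> Dc c * det2 (W c l j - W c l i) (p + t *\<^sub>R (q - p) - W c l i)" for i j
  proof -
    define E where "E = W c l j - W c l i"
    define A where "A = Dc c * det2 E (p + t *\<^sub>R (q - p) - W c l i)"
    define B where "B = Dc c * det2 E (q - p)"
    have lin: "Dc c * det2 E (p + s *\<^sub>R (q - p) - W c l i) = A + (s - t) * B" for s
      unfolding A_def B_def by (simp add: det2_def algebra_simps)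
    have "(B = 0 \<and> 0 \<le> A) \<or> 0 < A"
    proof (cases "det2 E (q - p) = 0")
      case True then show ?thesis using nn by (simp add: B_def A_def E_def)
    next
      case False
      have "det2 E (p + t *\<^sub>R (q - p) - W c l i) \<noteq> 0"
      proof
        assume 0: "det2 E (p + t *\<^sub>R (q - p) - W c l i) = 0"
        have "t \<in> X z p q" unfolding X_def
          apply (rule UN_I[of "(c, l)"], simp add: l zc)
          apply (rule UN_I[of i], simp add: ij)
          apply (rule UN_I[of j], simp add: ij)
          using 0 False by (simp add: E_def)
        then show False using t by blast
      qed
      then have "A \<noteq> 0" using Dc_nz[of c] by (simp add: A_def)
      moreover have "0 \<le> A" using nn unfolding A_def E_def .
      ultimately show ?thesis by linarith
    qed
    from aff_nonneg[OF this, of t] show ?thesis unfolding lin[symmetric] E_def by blast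
  qed
  have mem: "0 \<le> Dc c * det2 (W c l 2 - W c l 1) (p + t *\<^sub>R (q - p) - W c l 1) \<and>
     0 \<le> Dc c * det2 (W c l 0 - W c l 2) (p + t *\<^sub>R (q - p) - W c l 2) \<and>
     0 \<le> Dc c * det2 (W c l 1 - W c l 0) (p + t *\<^sub>R (q - p) - W c l 0)"
    using xc unfolding mem_cell_iff .
  obtain e1 where e1: "e1 > 0" "\<And>s. \<bar>s - t\<bar> < e1 \<Longrightarrow> 0 \<le> Dc c * det2 (W c l 2 - W c l 1) (p + s *\<^sub>R (q - p) - W c l 1)"
    using edge[of 1 2] mem by auto
  obtain e2 where e2: "e2 > 0" "\<And>s. \<bar>s - t\<bar> < e2 \<Longrightarrow> 0 \<le> Dc c * det2 (W c l 0 - W c l 2) (p + s *\<^sub>R (q - p) - W c l 2)"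
    using edge[of 2 0] mem by auto
  obtain e3 where e3: "e3 > 0" "\<And>s. \<bar>s - t\<bar> < e3 \<Longrightarrow> 0 \<le> Dc c * det2 (W c l 1 - W c l 0) (p + s *\<^sub>R (q - p) - W c l 0)"
    using edge[of 0 1] mem by auto
  show ?thesis
  proof (intro exI[of _ "min e1 (min e2 e3)"] conjI allI impI)
    show "0 < min e1 (min e2 e3)" using e1 e2 e3 by simp
    fix s assume "\<bar>s - t\<bar> < min e1 (min e2 e3)"
    then show "p + s *\<^sub>R (q - p) \<in> cell V c l"
      unfolding mem_cell_iff using e1(2)[of s] e2(2)[of s] e3(2)[of s] by simp
  qed
qed

end


lemma affine_int:
  fixes f :: "real \<Rightarrow> real"
  assumes "(f has_integral I) {\<alpha>..\<beta>}" "0 < m"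
  shows "((\<lambda>x. m * f (m * x + c)) has_integral I) {(\<alpha> - c) / m..(\<beta> - c) / m}"
proof -
  have "((\<lambda>x. f (m *\<^sub>R x + c)) has_integral (I /\<^sub>R m ^ DIM(real))) (cbox ((\<alpha> - c) /\<^sub>R m) ((\<beta> - c) /\<^sub>R m))"
    using has_integral_affinity_iff[OF assms(2), of f c I \<alpha> \<beta>] assms(1) by simp
  then have "((\<lambda>x. f (m * x + c)) has_integral (I / m)) {(\<alpha> - c) / m..(\<beta> - c) / m}"
    by (simp add: divide_inverse_commute)
  from has_integral_mult_right[OF this, of m] show ?thesis using assms(2) by simp
qed

context dk begin

lemma deriv_at:
  assumes t: "t \<notin> X z p q" and inb: "p + t *\<^sub>R (q - p) \<in> ball z (rad z)"
  shows "((\<lambda>s. Psi z (p + s *\<^sub>R (q - p))) has_vector_derivative hh p q t) (at t)"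
proof -
  define g where "g s = p + s *\<^sub>R (q - p)" for s :: real
  define c where "c = fst (cellof (g t))"
  define l where "l = snd (cellof (g t))"
  have cl: "cellof (g t) = (c, l)" by (simp add: c_def l_def)
  have l: "l \<in> L" and xc: "g t \<in> cell V c l" using cellof[of "g t"] cl by auto
  have zc: "z \<in> cell V c l" using rad_star[OF l xc] inb by (simp add: g_def)
  obtain e where e: "e > 0" "\<And>s. \<bar>s - t\<bar> < e \<Longrightarrow> g s \<in> cell V c l"
    using local_in_cell[OF t l zc] xc unfolding g_def by blast
  have gD: "(g has_derivative (\<lambda>h. h *\<^sub>R (q - p))) (at s)" for s
    unfolding g_def[abs_def] by (rule derivative_eq_intros refl)+ simp
  have D: "((\<lambda>s. Q c l (g s) - Q c l z) has_derivative (\<lambda>h. det2 (h *\<^sub>R (q - p)) (u c (g t - l)))) (at t)"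
    using has_derivative_diff[OF has_derivative_compose[OF gD Q_deriv[of c l "g t"]] has_derivative_const[of "Q c l z"]] by simp
  have hh: "hh p q t = det2 (q - p) (u c (g t - l))"
    unfolding hh_def U_def using cl by (simp add: g_def)
  have D': "((\<lambda>s. Q c l (g s) - Q c l z) has_derivative (\<lambda>h. h *\<^sub>R hh p q t)) (at t)"
    using D unfolding hh by (simp add: det2_scale_left)
  have "((\<lambda>s. Psi z (g s)) has_derivative (\<lambda>h. h *\<^sub>R hh p q t)) (at t)"
  proof (rule has_derivative_transform_within_open[OF D' open_ball[of t e]])
    show "t \<in> ball t e" using e by simp
    fix s assume "s \<in> ball t e"
    then have "\<bar>s - t\<bar> < e" by (simp add: dist_real_def abs_minus_commute)
    then show "Q c l (g s) - Q c l z = Psi z (g s)" using Psi_eq[OF l zc e(2)] by simp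
  qed
  then show ?thesis unfolding has_vector_derivative_def g_def .
qed

lemma LFTC:
  assumes uv: "u0 \<le> v0" and inb: "\<And>s. s \<in> {u0..v0} \<Longrightarrow> p + s *\<^sub>R (q - p) \<in> ball z (rad z)"
  shows "(hh p q has_integral (Psi z (p + v0 *\<^sub>R (q - p)) - Psi z (p + u0 *\<^sub>R (q - p)))) {u0..v0}"
proof (rule fundamental_theorem_of_calculus_interior_strong[OF X_finite uv])
  fix s assume "s \<in> {u0<..<v0} - X z p q"
  then show "((\<lambda>s. Psi z (p + s *\<^sub>R (q - p))) has_vector_derivative hh p q s) (at s)"
    using deriv_at inb by auto
next
  have "continuous_on {u0..v0} (\<lambda>s. p + s *\<^sub>R (q - p))" by (intro continuous_intros)
  then show "continuous_on {u0..v0} (\<lambda>s. Psi z (p + s *\<^sub>R (q - p)))"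
    by (rule continuous_on_compose2[OF Psi_cont]) (use inb in auto)
qed

lemma hh_integrable: "hh p q integrable_on {0..1}"
proof -
  have "hh p q integrable_on cbox 0 1"
  proof (rule integrable_on_little_subintervals, intro ballI)
    fix x :: real assume "x \<in> cbox 0 1"
    define z where "z = p + x *\<^sub>R (q - p)"
    define d where "d = rad z / (norm (q - p) + 1)"
    have np: "0 < norm (q - p) + 1" using norm_ge_zero[of "q - p"] by linarith
    have d: "d > 0" using rad(1)[of z] np by (simp add: d_def)
    show "\<exists>d>0. \<forall>u v. x \<in> cbox u v \<and> cbox u v \<subseteq> ball x d \<and> cbox u v \<subseteq> cbox 0 1 \<longrightarrow> hh p q integrable_on cbox u v"
    proof (intro exI[of _ d] conjI allI impI d)
      fix u0 v0 assume H: "x \<in> cbox u0 v0 \<and> cbox u0 v0 \<subseteq> ball x d \<and> cbox u0 v0 \<subseteq> cbox 0 1"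
      then have uv: "u0 \<le> v0" by auto
      have "p + s *\<^sub>R (q - p) \<in> ball z (rad z)" if s: "s \<in> {u0..v0}" for s
      proof -
        have "\<bar>s - x\<bar> < d" using H s by (auto simp: dist_real_def subset_iff abs_minus_commute)
        have "z - (p + s *\<^sub>R (q - p)) = (x - s) *\<^sub>R (q - p)" by (simp add: z_def algebra_simps)
        then have "dist z (p + s *\<^sub>R (q - p)) = \<bar>s - x\<bar> * norm (q - p)"
          by (simp add: dist_norm abs_minus_commute)
        also have "\<dots> \<le> \<bar>s - x\<bar> * (norm (q - p) + 1)" by (simp add: mult_left_mono)
        also have "\<dots> < d * (norm (q - p) + 1)"
          using \<open>\<bar>s - x\<bar> < d\<close> np by (intro mult_strict_right_mono) auto
        also have "\<dots> = rad z" using np by (simp add: d_def)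
        finally show ?thesis by simp
      qed
      from LFTC[OF uv this] show "hh p q integrable_on cbox u0 v0" by auto
    qed
  qed
  then show ?thesis by simp
qed

definition J :: "real \<times> real \<Rightarrow> real \<times> real \<Rightarrow> real" where
  "J p q = integral {0..1} (hh p q)"

lemma J_local:
  assumes "p \<in> ball z (rad z)" "q \<in> ball z (rad z)"
  shows "J p q = Psi z q - Psi z p"
proof -
  have "p + s *\<^sub>R (q - p) \<in> ball z (rad z)" if "s \<in> {0..1}" for s
  proof -
    have "p + s *\<^sub>R (q - p) = (1 - s) *\<^sub>R p + s *\<^sub>R q" by (simp add: algebra_simps)
    then show ?thesis using convexD[OF convex_ball assms, of "1 - s" s] that by simp
  qed
  from LFTC[of 0 1, OF _ this] show ?thesis unfolding J_def by (simp add: integral_unique)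
qed

lemma J_rev: "J q p = - J p q"
proof -
  have "(hh p q has_integral J p q) {0..1}" unfolding J_def using hh_integrable by (simp add: integrable_integral)
  from affine_int[OF this, of 1 1] have r: "((\<lambda>x. hh p q (x + 1)) has_integral J p q) {-1..0}"
    by (simp del: has_integral_reflect_real)
  have "((\<lambda>x. hh p q (- x + 1)) has_integral J p q) {-0..-(-1)}"
    using iffD2[OF has_integral_reflect_real r] by (simp only:)
  then have "((\<lambda>x. hh p q (- x + 1)) has_integral J p q) {0..1}" by (simp only: minus_zero minus_minus)
  then have "((\<lambda>x. - hh p q (- x + 1)) has_integral - J p q) {0..1}" by (rule has_integral_neg)
  moreover have "hh q p = (\<lambda>x. - hh p q (- x + 1))"
  proof (rule ext)
    fix x
    have 1: "q + x *\<^sub>R (p - q) = p + (- x + 1) *\<^sub>R (q - p)" by (simp add: algebra_simps)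
    have 2: "det2 (p - q) v = - det2 (q - p) v" for v by (simp add: det2_def algebra_simps)
    show "hh q p x = - hh p q (- x + 1)" unfolding hh_def 1 2 ..
  qed
  ultimately have "(hh q p has_integral - J p q) {0..1}" by (simp only:)
  then show ?thesis unfolding J_def[of q p] by (rule integral_unique)
qed

lemma J_split:
  fixes p q :: "real \<times> real"
  defines "m \<equiv> p + (1/2) *\<^sub>R (q - p)"
  shows "J p q = J p m + J m q"
proof -
  have int: "hh p q integrable_on {0..1}" by (rule hh_integrable)
  define I1 where "I1 = integral {0..1/2} (hh p q)"
  define I2 where "I2 = integral {1/2..1} (hh p q)"
  have h1: "(hh p q has_integral I1) {0..1/2}" unfolding I1_def
    by (rule integrable_integral, rule integrable_subinterval_real[OF int]) auto
  have h2: "(hh p q has_integral I2) {1/2..1}" unfolding I2_def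
    by (rule integrable_integral, rule integrable_subinterval_real[OF int]) auto
  have "(hh p q has_integral I1 + I2) {0..1}" by (rule has_integral_combine[OF _ _ h1 h2]) auto
  then have J: "J p q = I1 + I2" unfolding J_def by (rule integral_unique)
  have e1: "hh p m x = 1/2 * hh p q (1/2 * x + 0)" for x
  proof -
    have 1: "m - p = (1/2) *\<^sub>R (q - p)" by (simp add: m_def)
    have 2: "p + x *\<^sub>R ((1/2) *\<^sub>R (q - p)) = p + (1/2 * x + 0) *\<^sub>R (q - p)" by (simp add: algebra_simps)
    show ?thesis unfolding hh_def 1 2 det2_scale_left ..
  qed
  have e2: "hh m q x = 1/2 * hh p q (1/2 * x + 1/2)" for x
  proof -
    have "q - m = (q - p) - (1/2) *\<^sub>R (q - p)" by (simp add: m_def diff_diff_eq)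
    also have "\<dots> = (1 - 1/2) *\<^sub>R (q - p)" by (simp only: scaleR_diff_left scaleR_one)
    finally have 1: "q - m = (1/2) *\<^sub>R (q - p)" by simp
    have 2: "m + x *\<^sub>R ((1/2) *\<^sub>R (q - p)) = p + (1/2 * x + 1/2) *\<^sub>R (q - p)" by (simp add: m_def algebra_simps)
    show ?thesis unfolding hh_def 1 2 det2_scale_left ..
  qed
  from affine_int[OF h1, of "1/2" 0] have "(hh p m has_integral I1) {0..1}" unfolding e1 by (simp del: has_integral_reflect_real)
  then have "J p m = I1" unfolding J_def by (rule integral_unique)
  moreover from affine_int[OF h2, of "1/2" "1/2"] have "(hh m q has_integral I2) {0..1}" unfolding e2 by (simp del: has_integral_reflect_real)
  then have "J m q = I2" unfolding J_def by (rule integral_unique)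
  ultimately show ?thesis using J by simp
qed

end


definition mid :: "real \<times> real \<Rightarrow> real \<times> real \<Rightarrow> real \<times> real" where
  "mid x y = (1/2) *\<^sub>R (x + y)"

lemma half_half[simp]: "(1/2) *\<^sub>R x + (1/2) *\<^sub>R x = (x::real\<times>real)"
  by (simp flip: scaleR_add_left)

lemma mid_alt: "x + (1/2) *\<^sub>R (y - x) = mid x y"
  by (simp add: mid_def algebra_simps)

lemma dist_mid1: "dist x (mid x y) = dist x y / 2"
proof -
  have "x - mid x y = (1/2) *\<^sub>R (x - y)" by (simp add: mid_def algebra_simps)
  then show ?thesis by (simp add: dist_norm)
qed
lemma dist_mid2: "dist (mid x y) y = dist x y / 2"
proof -
  have "mid x y - y = (1/2) *\<^sub>R (x - y)" by (simp add: mid_def algebra_simps)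
  then show ?thesis by (simp add: dist_norm)
qed
lemma dist_mid3: "dist (mid x y) (mid x w) = dist y w / 2"
proof -
  have "mid x y - mid x w = (1/2) *\<^sub>R (y - w)" by (simp add: mid_def algebra_simps)
  then show ?thesis by (simp add: dist_norm)
qed
lemma dist_mid4: "dist (mid x y) (mid w y) = dist x w / 2"
proof -
  have "mid x y - mid w y = (1/2) *\<^sub>R (x - w)" by (simp add: mid_def algebra_simps)
  then show ?thesis by (simp add: dist_norm)
qed
lemma dist_mid5: "dist (mid x y) (mid y w) = dist x w / 2"
proof -
  have "mid x y - mid y w = (1/2) *\<^sub>R (x - w)" by (simp add: mid_def algebra_simps)
  then show ?thesis by (simp add: dist_norm)
qed

lemma mid_cball: "x \<in> cball 0 R \<Longrightarrow> y \<in> cball 0 R \<Longrightarrow> mid x y \<in> cball 0 R"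
proof -
  assume "x \<in> cball 0 R" "y \<in> cball 0 R"
  from convexD[OF convex_cball this, of "1/2" "1/2"] show ?thesis
    by (simp add: mid_def scaleR_add_right)
qed

context dk begin

lemma J_mid: "J p q = J p (mid p q) + J (mid p q) q"
  using J_split[of p q] unfolding mid_alt .

definition T :: "real \<times> real \<Rightarrow> real \<times> real \<Rightarrow> real \<times> real \<Rightarrow> real" where
  "T p q r = J p q + J q r + J r p"

lemma T_small:
  assumes "p \<in> ball z (rad z)" "q \<in> ball z (rad z)" "r \<in> ball z (rad z)"
  shows "T p q r = 0"
  unfolding T_def using J_local[OF assms(1,2)] J_local[OF assms(2,3)] J_local[OF assms(3,1)] by simp

lemma T_split:
  "T p q r = T p (mid p q) (mid r p) + T (mid p q) q (mid q r) + T (mid r p) (mid q r) r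
     + T (mid p q) (mid q r) (mid r p)"
proof -
  have "J (mid p q) (mid r p) + J (mid r p) (mid p q) = 0"
       "J (mid q r) (mid p q) + J (mid p q) (mid q r) = 0"
       "J (mid r p) (mid q r) + J (mid q r) (mid r p) = 0"
    using J_rev[of "mid p q" "mid r p"] J_rev[of "mid q r" "mid p q"] J_rev[of "mid r p" "mid q r"] by linarith+
  then show ?thesis
    unfolding T_def using J_mid[of p q] J_mid[of q r] J_mid[of r p] by linarith
qed

lemma T_zero: "T p q r = 0"
proof -
  define R where "R = norm p + norm q + norm r + norm p + norm q + norm r + 1"
  define K where "K = cball (0::real\<times>real) R"
  have "compact K" unfolding K_def by simp
  moreover have "K \<subseteq> \<Union>(range (\<lambda>z. ball z (rad z)))"
  proof
    fix x assume "x \<in> K"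
    show "x \<in> \<Union>(range (\<lambda>z. ball z (rad z)))" using rad(1)[of x] by (intro UnionI[of "ball x (rad x)"]) auto
  qed
  ultimately have "\<exists>\<epsilon>>0. \<forall>x\<in>K. \<exists>G \<in> range (\<lambda>z. ball z (rad z)). ball x \<epsilon> \<subseteq> G"
  proof (rule Heine_Borel_lemma)
    show "\<And>G. G \<in> range (\<lambda>z. ball z (rad z)) \<Longrightarrow> open G" by auto
  next
    fix \<epsilon> :: real assume "0 < \<epsilon>" "\<And>x. x \<in> K \<Longrightarrow> \<exists>G \<in> range (\<lambda>z. ball z (rad z)). ball x \<epsilon> \<subseteq> G"
    then show "\<exists>\<epsilon>>0. \<forall>x\<in>K. \<exists>G \<in> range (\<lambda>z. ball z (rad z)). ball x \<epsilon> \<subseteq> G" by blast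
  qed
  then obtain \<epsilon> where \<epsilon>: "\<epsilon> > 0" "\<And>x. x \<in> K \<Longrightarrow> \<exists>G \<in> range (\<lambda>z. ball z (rad z)). ball x \<epsilon> \<subseteq> G"
    by blast
  have claim: "\<forall>p q r. p \<in> K \<and> q \<in> K \<and> r \<in> K \<and> dist p q < \<epsilon> * 2 ^ n \<and> dist q r < \<epsilon> * 2 ^ n \<and> dist r p < \<epsilon> * 2 ^ n
     \<longrightarrow> T p q r = 0" for n
  proof (induction n)
    case 0
    show ?case
    proof (intro allI impI)
      fix p q r assume H: "p \<in> K \<and> q \<in> K \<and> r \<in> K \<and> dist p q < \<epsilon> * 2 ^ 0 \<and> dist q r < \<epsilon> * 2 ^ 0 \<and> dist r p < \<epsilon> * 2 ^ 0"
      obtain z where z: "ball p \<epsilon> \<subseteq> ball z (rad z)" using \<epsilon>(2)[of p] H by blast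
      have "p \<in> ball p \<epsilon>" "q \<in> ball p \<epsilon>" "r \<in> ball p \<epsilon>" using H \<epsilon>(1) by (auto simp: dist_commute)
      then show "T p q r = 0" using z T_small by blast
    qed
  next
    case (Suc n)
    show ?case
    proof (intro allI impI)
      fix p q r assume H: "p \<in> K \<and> q \<in> K \<and> r \<in> K \<and> dist p q < \<epsilon> * 2 ^ Suc n \<and> dist q r < \<epsilon> * 2 ^ Suc n \<and> dist r p < \<epsilon> * 2 ^ Suc n"
      have d: "dist p q / 2 < \<epsilon> * 2 ^ n" "dist q r / 2 < \<epsilon> * 2 ^ n" "dist r p / 2 < \<epsilon> * 2 ^ n"
        using H by auto
      have inK: "mid p q \<in> K" "mid q r \<in> K" "mid r p \<in> K" using H mid_cball unfolding K_def by auto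
      have mc: "mid x y = mid y x" for x y by (simp add: mid_def add.commute)
      have IH: "T x y w = 0" if "x \<in> K" "y \<in> K" "w \<in> K" "dist x y < \<epsilon> * 2 ^ n" "dist y w < \<epsilon> * 2 ^ n" "dist w x < \<epsilon> * 2 ^ n" for x y w
        using Suc.IH that by blast
      have "T p (mid p q) (mid r p) = 0"
      proof (rule IH)
        show "dist p (mid p q) < \<epsilon> * 2 ^ n" using d dist_mid1[of p q] by simp
        show "dist (mid p q) (mid r p) < \<epsilon> * 2 ^ n" using d dist_mid3[of p q r] mc[of r p] by simp
        show "dist (mid r p) p < \<epsilon> * 2 ^ n" using d dist_mid2[of r p] by simp
      qed (use H inK in auto)
      moreover have "T (mid p q) q (mid q r) = 0"
      proof (rule IH)
        show "dist (mid p q) q < \<epsilon> * 2 ^ n" using d dist_mid2[of p q] by simp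
        show "dist q (mid q r) < \<epsilon> * 2 ^ n" using d dist_mid1[of q r] by simp
        show "dist (mid q r) (mid p q) < \<epsilon> * 2 ^ n" using d dist_mid3[of q r p] mc[of p q] by simp
      qed (use H inK in auto)
      moreover have "T (mid r p) (mid q r) r = 0"
      proof (rule IH)
        show "dist (mid r p) (mid q r) < \<epsilon> * 2 ^ n" using d dist_mid3[of r p q] mc[of q r] dist_commute[of p q] by simp
        show "dist (mid q r) r < \<epsilon> * 2 ^ n" using d dist_mid2[of q r] by simp
        show "dist r (mid r p) < \<epsilon> * 2 ^ n" using d dist_mid1[of r p] by simp
      qed (use H inK in auto)
      moreover have "T (mid p q) (mid q r) (mid r p) = 0"
      proof (rule IH)
        show "dist (mid p q) (mid q r) < \<epsilon> * 2 ^ n" using d dist_mid5[of p q r] dist_commute[of p r] by simp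
        show "dist (mid q r) (mid r p) < \<epsilon> * 2 ^ n" using d dist_mid5[of q r p] dist_commute[of q p] by simp
        show "dist (mid r p) (mid p q) < \<epsilon> * 2 ^ n" using d dist_mid5[of r p q] dist_commute[of r q] by simp
      qed (use inK in auto)
      ultimately show "T p q r = 0" using T_split[of p q r] by simp
    qed
  qed
  obtain n where n: "R / \<epsilon> < 2 ^ n" using real_arch_pow[of 2 "R / \<epsilon>"] by auto
  then have Rn: "R < \<epsilon> * 2 ^ n" using \<epsilon>(1) by (simp add: field_simps)
  have nn: "0 \<le> norm p" "0 \<le> norm q" "0 \<le> norm r" by simp_all
  have "norm p \<le> R" using nn unfolding R_def by linarith
  moreover have "norm q \<le> R" using nn unfolding R_def by linarith
  moreover have "norm r \<le> R" using nn unfolding R_def by linarith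
  ultimately have inK: "p \<in> K" "q \<in> K" "r \<in> K" unfolding K_def by simp_all
  have "dist p q \<le> norm p + norm q" "dist q r \<le> norm q + norm r" "dist r p \<le> norm r + norm p"
    by (simp_all add: dist_norm norm_triangle_ineq4)
  then have "dist p q < R \<and> dist q r < R \<and> dist r p < R"
    using nn unfolding R_def by linarith
  then have "dist p q < R" "dist q r < R" "dist r p < R" by simp_all
  then have "dist p q < \<epsilon> * 2 ^ n" "dist q r < \<epsilon> * 2 ^ n" "dist r p < \<epsilon> * 2 ^ n" using Rn by linarith+
  then show ?thesis using claim[of n] inK by blast
qed

end


lemma psq_monomial:
  assumes "i0 \<le> N" "j0 \<le> N"
  shows "psq N (\<lambda>i j. if i = i0 \<and> j = j0 then C else 0) z = C * fst z ^ i0 * snd z ^ j0"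
proof -
  define T where "T i j = C * fst z ^ i * snd z ^ j" for i j
  have t: "(if i = i0 \<and> j = j0 then C else 0) * fst z ^ i * snd z ^ j = (if i = i0 \<and> j = j0 then T i j else 0)" for i j
    by (simp add: T_def)
  have inner: "(\<Sum>j\<le>N. if i = i0 \<and> j = j0 then T i j else 0) = (if i = i0 then T i j0 else 0)" for i
  proof (cases "i = i0")
    case True
    then show ?thesis using assms(2) by (simp only: True simp_thms sum.delta[OF finite_atMost] atMost_iff if_True)
  next
    case False
    then show ?thesis by simp
  qed
  have "psq N (\<lambda>i j. if i = i0 \<and> j = j0 then C else 0) z = (\<Sum>i\<le>N. if i = i0 then T i j0 else 0)"
    unfolding psq_def t inner ..
  also have "\<dots> = T i0 j0" using assms(1) by (simp only: sum.delta[OF finite_atMost] atMost_iff if_True)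
  finally show ?thesis by (simp add: T_def)
qed

lemma poly2_add_affine:
  assumes "poly2 d p" "1 \<le> d"
  shows "poly2 d (\<lambda>x. p x + K + \<alpha> * fst x + \<beta> * snd x)"
proof -
  obtain c where c: "\<And>i j. d < i + j \<Longrightarrow> c i j = 0" "p = psq d c" using poly2_psq[OF assms(1)] by blast
  define c' where "c' i j = c i j + ((if i = 0 \<and> j = 0 then K else 0) + ((if i = 1 \<and> j = 0 then \<alpha> else 0) + (if i = 0 \<and> j = 1 then \<beta> else 0)))" for i j
  have "psq d c' x = p x + K + \<alpha> * fst x + \<beta> * snd x" for x
    unfolding c'_def psq_add c(2) using assms(2)
    by (simp add: psq_monomial del: One_nat_def)
  then have "(\<lambda>x. p x + K + \<alpha> * fst x + \<beta> * snd x) = psq d c'" by auto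
  moreover have "\<And>i j. d < i + j \<Longrightarrow> c' i j = 0" using c(1) assms(2) by (auto simp: c'_def)
  ultimately show ?thesis using psq_poly2 by metis
qed

lemma poly2_add_const:
  assumes "poly2 d p"
  shows "poly2 d (\<lambda>x. p x + K)"
proof -
  obtain c where c: "\<And>i j. d < i + j \<Longrightarrow> c i j = 0" "p = psq d c" using poly2_psq[OF assms(1)] by blast
  define c' where "c' i j = c i j + (if i = 0 \<and> j = 0 then K else 0)" for i j
  have "psq d c' x = p x + K" for x
    unfolding c'_def psq_add c(2) by (simp add: psq_monomial)
  then have "(\<lambda>x. p x + K) = psq d c'" by auto
  moreover have "\<And>i j. d < i + j \<Longrightarrow> c' i j = 0" using c(1) by (auto simp: c'_def)
  ultimately show ?thesis using psq_poly2 by metis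
qed


context tm begin

lemma loc_const_cells:
  assumes "\<And>c l x y. l \<in> L \<Longrightarrow> x \<in> cell V c l \<Longrightarrow> y \<in> cell V c l \<Longrightarrow> f x = f y"
  shows "f x = f y"
proof (rule connected_local_const[of UNIV x y f])
  show "\<forall>a\<in>UNIV. eventually (\<lambda>b. f a = f b) (at a within UNIV)"
  proof
    fix a :: "real \<times> real"
    obtain r where r: "r > 0" "\<And>c l. l \<in> L \<Longrightarrow> cell V c l \<inter> ball a r \<noteq> {} \<Longrightarrow> a \<in> cell V c l"
      using star[of a] by blast
    show "eventually (\<lambda>b. f a = f b) (at a within UNIV)"
      unfolding eventually_at
    proof (intro exI[of _ r] conjI ballI impI r(1))
      fix b :: "real \<times> real" assume "b \<noteq> a \<and> dist b a < r"
      then have b: "b \<in> ball a r" by (simp add: dist_commute)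
      obtain c l where cl: "l \<in> L" "b \<in> cell V c l" using cover[of b] by blast
      then have "a \<in> cell V c l" using r(2)[of l c] b by blast
      then show "f a = f b" using assms cl by blast
    qed
  qed
qed auto

lemma L_int:
  assumes "l \<in> L" shows "of_int m *\<^sub>R l \<in> L"
proof -
  obtain i j where l: "l = of_int i *\<^sub>R a + of_int j *\<^sub>R b" using assms unfolding L_iff by auto
  have "of_int m *\<^sub>R l = of_int (m * i) *\<^sub>R a + of_int (m * j) *\<^sub>R b" unfolding l by (simp add: algebra_simps)
  then show ?thesis unfolding L_iff by (intro exI)
qed

lemma additive_int:
  fixes C :: "real \<times> real \<Rightarrow> real"
  assumes add: "\<And>l l'. l \<in> L \<Longrightarrow> l' \<in> L \<Longrightarrow> C (l + l') = C l + C l'" and l: "l \<in> L"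
  shows "C (of_int m *\<^sub>R l) = of_int m * C l"
proof -
  have C0: "C 0 = 0" using add[OF L0 L0] by simp
  have nat: "C (of_nat n *\<^sub>R l) = of_nat n * C l" for n
  proof (induction n)
    case 0 then show ?case using C0 by simp
  next
    case (Suc n)
    have "of_nat (Suc n) *\<^sub>R l = of_nat n *\<^sub>R l + l" by (simp add: algebra_simps)
    moreover have "of_nat n *\<^sub>R l \<in> L" using L_int[OF l, of "int n"] by simp
    ultimately show ?case using add[of "of_nat n *\<^sub>R l" l] l Suc.IH by (simp add: algebra_simps)
  qed
  have neg: "C (- x) = - C x" if "x \<in> L" for x
    using add[OF that Lneg[OF that]] C0 by simp
  show ?thesis
  proof (cases "0 \<le> m")
    case True
    then obtain n where "m = int n" using nonneg_int_cases by blast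
    then show ?thesis using nat[of n] by simp
  next
    case False
    define n where "n = nat (- m)"
    have n: "m = - int n" using False by (simp add: n_def)
    have "of_nat n *\<^sub>R l \<in> L" using L_int[OF l, of "int n"] by simp
    then show ?thesis using nat[of n] neg[of "of_nat n *\<^sub>R l"] n by simp
  qed
qed

end

context dk begin

definition G :: "real \<times> real \<Rightarrow> real" where "G x = J 0 x"

lemma J_G: "J x y = G y - G x"
  using T_zero[of 0 x y] J_rev[of y 0] unfolding T_def G_def by linarith

lemma G_local: "x \<in> ball z (rad z) \<Longrightarrow> y \<in> ball z (rad z) \<Longrightarrow> G y - G x = Psi z y - Psi z x"
proof -
  assume "x \<in> ball z (rad z)" "y \<in> ball z (rad z)"
  from J_local[OF this] show ?thesis unfolding J_G .
qed

lemma G_cont: "continuous_on UNIV G"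
proof (rule continuous_at_imp_continuous_on, intro ballI)
  fix x :: "real \<times> real"
  have cx: "x \<in> ball x (rad x)" using rad(1)[of x] by simp
  have "continuous_on (ball x (rad x)) (\<lambda>y. Psi x y + (G x - Psi x x))"
    by (intro continuous_on_add Psi_cont continuous_on_const)
  then have "continuous_on (ball x (rad x)) G"
    by (rule continuous_on_eq) (use G_local[OF cx] in \<open>simp add: algebra_simps\<close>)
  then show "isCont G x" using continuous_on_interior[of "ball x (rad x)" G x] cx by simp
qed

lemma G_cell:
  assumes l: "l \<in> L" and x: "x \<in> cell V c l" and y: "y \<in> cell V c l"
  shows "G x - Q c l x = G y - Q c l y"
proof (rule connected_local_const[of "cell V c l" x y "\<lambda>x. G x - Q c l x"])
  show "connected (cell V c l)" using cell_convex convex_connected by blast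
  show "\<forall>a\<in>cell V c l. eventually (\<lambda>b. G a - Q c l a = G b - Q c l b) (at a within cell V c l)"
  proof
    fix a assume a: "a \<in> cell V c l"
    show "eventually (\<lambda>b. G a - Q c l a = G b - Q c l b) (at a within cell V c l)"
      unfolding eventually_at
    proof (intro exI[of _ "rad a"] conjI ballI impI rad(1))
      fix b assume b: "b \<in> cell V c l" "b \<noteq> a \<and> dist b a < rad a"
      have ab: "a \<in> ball a (rad a)" "b \<in> ball a (rad a)" using b rad(1)[of a] by (auto simp: dist_commute)
      have "G b - G a = Psi a b - Psi a a" by (rule G_local[OF ab])
      also have "\<dots> = (Q c l b - Q c l a) - (Q c l a - Q c l a)" using Psi_eq[OF l a b(1)] Psi_eq[OF l a a] by simp
      finally show "G a - Q c l a = G b - Q c l b" by simp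
    qed
  qed
qed (use x y in auto)

end


lemma cramer: fixes a1 a2 b1 b2 A B D :: real
  assumes "D = a1 * b2 - a2 * b1" "D \<noteq> 0"
  shows "((A * b2 - B * a2) / D) * a1 + ((a1 * B - b1 * A) / D) * a2 = A"
    "((A * b2 - B * a2) / D) * b1 + ((a1 * B - b1 * A) / D) * b2 = B"
proof -
  have "((A * b2 - B * a2) / D) * a1 + ((a1 * B - b1 * A) / D) * a2 = ((A * b2 - B * a2) * a1 + (a1 * B - b1 * A) * a2) / D"
    by (simp add: add_divide_distrib)
  also have "(A * b2 - B * a2) * a1 + (a1 * B - b1 * A) * a2 = A * D" unfolding assms(1) by (simp add: algebra_simps)
  finally show "((A * b2 - B * a2) / D) * a1 + ((a1 * B - b1 * A) / D) * a2 = A" using assms(2) by simp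
  have "((A * b2 - B * a2) / D) * b1 + ((a1 * B - b1 * A) / D) * b2 = ((A * b2 - B * a2) * b1 + (a1 * B - b1 * A) * b2) / D"
    by (simp add: add_divide_distrib)
  also have "(A * b2 - B * a2) * b1 + (a1 * B - b1 * A) * b2 = B * D" unfolding assms(1) by (simp add: algebra_simps)
  finally show "((A * b2 - B * a2) / D) * b1 + ((a1 * B - b1 * A) / D) * b2 = B" using assms(2) by simp
qed

context dk begin

definition Cl :: "real \<times> real \<Rightarrow> real" where "Cl l = G l - G 0"

lemma G_shift:
  assumes l: "l \<in> L" shows "G (x + l) = G x + Cl l"
proof -
  have "G (x + l) - G x = G (0 + l) - G 0"
  proof (rule loc_const_cells[where f="\<lambda>x. G (x + l) - G x"])
    fix c l' x y assume l': "l' \<in> L" and x: "x \<in> cell V c l'" and y: "y \<in> cell V c l'"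
    have ll: "l' + l \<in> L" using Ladd[OF l' l] .
    have x2: "x + l \<in> cell V c (l' + l)" using x by (simp add: mem_cell_translate)
    have y2: "y + l \<in> cell V c (l' + l)" using y by (simp add: mem_cell_translate)
    have q: "Q c (l' + l) (z + l) = Q c l' z" for z by (simp add: Q_def)
    from G_cell[OF ll x2 y2] G_cell[OF l' x y] show "G (x + l) - G x = G (y + l) - G y"
      unfolding q by linarith
  qed
  then show ?thesis unfolding Cl_def by simp
qed

lemma Cl_add: "l \<in> L \<Longrightarrow> l' \<in> L \<Longrightarrow> Cl (l + l') = Cl l + Cl l'"
  using G_shift[of l' l] unfolding Cl_def by simp

lemma main_subset: "\<exists>v e. u = (\<lambda>c x. v c x + e) \<and> rotgrad_range a b V k v"
proof -
  define D where "D = det2 a b"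
  have D: "D \<noteq> 0" using detab by (simp add: D_def)
  define \<alpha> where "\<alpha> = (Cl a * snd b - Cl b * snd a) / D"
  define \<beta> where "\<beta> = (fst a * Cl b - fst b * Cl a) / D"
  define gl where "gl x = \<alpha> * fst x + \<beta> * snd x" for x :: "real \<times> real"
  have La: "a \<in> L" unfolding L_iff by (rule exI[of _ 1], rule exI[of _ 0]) simp
  have Lb: "b \<in> L" unfolding L_iff by (rule exI[of _ 0], rule exI[of _ 1]) simp
  have Dd: "D = fst a * snd b - snd a * fst b" by (simp add: D_def det2_def)
  have ga: "gl a = Cl a" unfolding gl_def \<alpha>_def \<beta>_def using cramer(1)[OF Dd D] .
  have gb: "gl b = Cl b" unfolding gl_def \<alpha>_def \<beta>_def using cramer(2)[OF Dd D] .
  have gL: "gl l = Cl l" if "l \<in> L" for l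
  proof -
    from that[unfolded L_iff] obtain m n where l: "l = of_int m *\<^sub>R a + of_int n *\<^sub>R b" by blast
    have "Cl l = Cl (of_int m *\<^sub>R a) + Cl (of_int n *\<^sub>R b)" unfolding l
      by (rule Cl_add[OF L_int[OF La] L_int[OF Lb]])
    also have "\<dots> = of_int m * Cl a + of_int n * Cl b"
      using additive_int[of Cl, OF Cl_add La] additive_int[of Cl, OF Cl_add Lb] by simp
    also have "\<dots> = gl l" unfolding l ga[symmetric] gb[symmetric] gl_def by (simp add: algebra_simps)
    finally show ?thesis by simp
  qed
  define \<psi> where "\<psi> x = G x - gl x" for x
  define e where "e = (- \<beta>, \<alpha>)"
  define v where "v c x = u c x - e" for c x
  have cont: "continuous_on UNIV \<psi>" unfolding \<psi>_def gl_def by (intro continuous_on_diff G_cont continuous_intros)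
  have per: "\<forall>l\<in>L. \<forall>x. \<psi> (x + l) = \<psi> x"
    using G_shift gL unfolding \<psi>_def gl_def by (simp add: algebra_simps)
  define pc where "pc c x = P c x + (G (V c 0) - Q c 0 (V c 0)) + (- \<alpha>) * fst x + (- \<beta>) * snd x" for c x
  have pc_poly: "poly2 (k+1) (pc c)" for c
    unfolding pc_def[abs_def] by (rule poly2_add_affine[OF P_poly]) simp
  have pc_eq: "\<psi> x = pc c x" if "x \<in> tri V c" for c x
  proof -
    have x0: "x \<in> cell V c 0" "V c 0 \<in> cell V c 0" using that vert_in_cell[of 0 c 0] by (simp_all add: cell0)
    from G_cell[OF L0 x0] have "G x = Q c 0 x + (G (V c 0) - Q c 0 (V c 0))" by simp
    then show ?thesis unfolding \<psi>_def pc_def gl_def by (simp add: Q_def)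
  qed
  have pc_deriv: "(pc c has_derivative (\<lambda>h. fst h * (snd (u c x) - \<alpha>) + snd h * (- fst (u c x) - \<beta>))) (at x)" for c x
  proof -
    have "(pc c has_derivative (\<lambda>h. det2 h (u c x) + 0 + (- \<alpha>) * fst h + (- \<beta>) * snd h)) (at x)"
      unfolding pc_def[abs_def]
      by (intro has_derivative_add P_deriv has_derivative_const has_derivative_mult_right bounded_linear_imp_has_derivative bounded_linear_fst bounded_linear_snd)
    then show ?thesis by (simp add: det2_def algebra_simps)
  qed
  have rg: "v c x = rotgrad \<psi> x" if "x \<in> interior (tri V c)" for c x
  proof -
    have "dx \<psi> x = dx (pc c) x" "dy \<psi> x = dy (pc c) x"
      using dx_dy_local[OF open_interior that, of \<psi> "pc c"] pc_eq interior_subset by blast+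
    moreover have "dx (pc c) x = snd (u c x) - \<alpha>" "dy (pc c) x = - fst (u c x) - \<beta>"
      using dx_dy_of_has_derivative[OF pc_deriv] by blast+
    ultimately show ?thesis unfolding rotgrad_def v_def e_def by (simp add: prod_eq_iff)
  qed
  have dv: "dPk k v"
    unfolding dPk_def
  proof
    fix c
    have "poly2 k (\<lambda>z. fst (u c z))" "poly2 k (\<lambda>z. snd (u c z))" using dPk_u by (auto simp: dPk_def)
    from poly2_add_const[OF this(1), of "- fst e"] poly2_add_const[OF this(2), of "- snd e"]
    show "poly2 k (\<lambda>z. fst (v c z)) \<and> poly2 k (\<lambda>z. snd (v c z))" by (simp add: v_def)
  qed
  have "rotgrad_range a b V k v"
    unfolding rotgrad_range_def CGspace_def
    using dv cont per pc_poly pc_eq rg by blast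
  moreover have "u = (\<lambda>c x. v c x + e)" by (simp add: v_def)
  ultimately show ?thesis by blast
qed

end


lemma psq_eq_open:
  assumes "supp N c1" "supp M c2" "open S" "z0 \<in> S" "\<And>z. z \<in> S \<Longrightarrow> psq N c1 z = psq M c2 z"
  shows "psq N c1 z = psq M c2 z"
proof -
  define K where "K = max N M"
  have e1: "psq K c1 = psq N c1" by (rule psq_mono[OF assms(1)]) (simp add: K_def)
  have e2: "psq K c2 = psq M c2" by (rule psq_mono[OF assms(2)]) (simp add: K_def)
  have pd: "psq K (\<lambda>i j. c1 i j - c2 i j) z = psq K c1 z - psq K c2 z" for z
    unfolding psq_def by (simp add: left_diff_distrib sum_subtractf)
  have "\<forall>i\<le>K. \<forall>j\<le>K. (\<lambda>i j. c1 i j - c2 i j) i j = 0"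
  proof (rule psq_zero_open[OF assms(3,4)])
    fix z assume "z \<in> S"
    then show "psq K (\<lambda>i j. c1 i j - c2 i j) z = 0"
      using assms(5)[of z] unfolding pd e1 e2 by simp
  qed
  then have "psq K (\<lambda>i j. c1 i j - c2 i j) z = 0" by (rule psq_zero_all)
  then show ?thesis unfolding pd e1 e2 by simp
qed

lemma psq_const: "psq 0 (\<lambda>i j. C) z = C" by (simp add: psq_def)
lemma supp_const: "supp 0 (\<lambda>i j. if i = 0 \<and> j = 0 then C else 0)" by (simp add: supp_def)
lemma psq_const': "psq 0 (\<lambda>i j. if i = 0 \<and> j = 0 then C else 0) z = C" by (simp add: psq_def)

lemma supp_neg: "supp N c \<Longrightarrow> supp N (\<lambda>i j. - c i j)" by (simp add: supp_def)
lemma dxc_neg: "dxc (\<lambda>i j. - c i j) = (\<lambda>i j. - dxc c i j)" by (simp add: dxc_def fun_eq_iff)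

lemma poly2_supp: "poly2 d p \<Longrightarrow> \<exists>c. supp d c \<and> p = psq d c"
  using poly2_psq supp_tri by metis

context tm begin

lemma rotgrad_poly:
  assumes "poly2 k f1" "poly2 k f2" "poly2 (k+1) p" "\<And>x. x \<in> interior (tri V c) \<Longrightarrow> (f1 x, f2 x) = rotgrad p x"
  shows "\<exists>cc. supp (k+1) cc \<and> p = psq (k+1) cc \<and> (\<forall>z. f1 z = - psq (k+1) (dyc cc) z \<and> f2 z = psq (k+1) (dxc cc) z)"
proof -
  obtain cc where cc: "supp (k+1) cc" "p = psq (k+1) cc" using poly2_supp[OF assms(3)] by blast
  obtain c1 where c1: "supp k c1" "f1 = psq k c1" using poly2_supp[OF assms(1)] by blast
  obtain c2 where c2: "supp k c2" "f2 = psq k c2" using poly2_supp[OF assms(2)] by blast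
  obtain z0 where z0: "z0 \<in> interior (tri V c)" using interior_tri_ne by blast
  have dyp: "dy p z = psq (k+1) (dyc cc) z" for z using dy_psq[OF cc(1)] cc(2) by simp
  have dxp: "dx p z = psq (k+1) (dxc cc) z" for z using dx_psq[OF cc(1)] cc(2) by simp
  have "psq k c1 z = psq (k+1) (\<lambda>i j. - dyc cc i j) z" for z
  proof (rule psq_eq_open[OF c1(1) supp_neg[OF supp_dyc[OF cc(1)]] open_interior z0])
    fix z assume "z \<in> interior (tri V c)"
    from assms(4)[OF this] show "psq k c1 z = psq (k+1) (\<lambda>i j. - dyc cc i j) z"
      by (simp add: rotgrad_def c1(2) dyp psq_uminus)
  qed
  moreover have "psq k c2 z = psq (k+1) (dxc cc) z" for z
  proof (rule psq_eq_open[OF c2(1) supp_dxc[OF cc(1)] open_interior z0])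
    fix z assume "z \<in> interior (tri V c)"
    from assms(4)[OF this] show "psq k c2 z = psq (k+1) (dxc cc) z"
      by (simp add: rotgrad_def c2(2) dxp)
  qed
  ultimately show ?thesis using cc c1(2) c2(2) by (auto simp: psq_uminus)
qed

end


lemma dxdy_psq_const:
  assumes "supp N c"
  shows "dx (\<lambda>z. psq N c z + K) x = psq N (dxc c) x" "dy (\<lambda>z. psq N c z + K) x = psq N (dyc c) x"
proof -
  have "((\<lambda>z. psq N c z + K) has_derivative (\<lambda>h. fst h * psq N (dxc c) x + snd h * psq N (dyc c) x)) (at x)"
    using has_derivative_add[OF psq_has_derivative[OF assms] has_derivative_const[of K]] by simp
  from dx_dy_of_has_derivative[OF this] show "dx (\<lambda>z. psq N c z + K) x = psq N (dxc c) x" "dy (\<lambda>z. psq N c z + K) x = psq N (dyc c) x"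
    by blast+
qed

lemma poly2_const: "poly2 k (\<lambda>z. C)"
proof -
  have "poly2 k (psq k (\<lambda>i j. if i = 0 \<and> j = 0 then C else 0))" by (rule psq_poly2) auto
  moreover have "psq k (\<lambda>i j. if i = 0 \<and> j = 0 then C else 0) = (\<lambda>z. C)"
    by (rule ext) (simp add: psq_monomial)
  ultimately show ?thesis by simp
qed

context tm begin

lemma rr_data:
  assumes "rotgrad_range a b V k v"
  obtains \<psi> cc where "continuous_on UNIV \<psi>" "\<forall>l\<in>L. \<forall>x. \<psi> (x + l) = \<psi> x"
    "\<And>c. supp (k+1) (cc c)" "\<And>c x. x \<in> tri V c \<Longrightarrow> \<psi> x = psq (k+1) (cc c) x"
    "\<And>c z. fst (v c z) = - psq (k+1) (dyc (cc c)) z" "\<And>c z. snd (v c z) = psq (k+1) (dxc (cc c)) z"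
proof -
  obtain \<psi> where dv: "dPk k v" and cg: "CGspace a b V (k + 1) \<psi>"
    and rg: "\<And>c x. x \<in> interior (tri V c) \<Longrightarrow> v c x = rotgrad \<psi> x"
    using assms unfolding rotgrad_range_def by blast
  have ex: "\<exists>C. supp (k+1) C \<and> (\<forall>x\<in>tri V c. \<psi> x = psq (k+1) C x) \<and>
      (\<forall>z. fst (v c z) = - psq (k+1) (dyc C) z \<and> snd (v c z) = psq (k+1) (dxc C) z)" for c
  proof -
    obtain p where p: "poly2 (k+1) p" "\<And>x. x \<in> tri V c \<Longrightarrow> \<psi> x = p x" using cg unfolding CGspace_def by blast
    have "(fst (v c x), snd (v c x)) = rotgrad p x" if "x \<in> interior (tri V c)" for x
    proof -
      have "dx \<psi> x = dx p x" "dy \<psi> x = dy p x"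
        using dx_dy_local[OF open_interior that, of \<psi> p] p(2) interior_subset by blast+
      then show ?thesis using rg[OF that] by (simp add: rotgrad_def)
    qed
    from rotgrad_poly[of k "\<lambda>z. fst (v c z)" "\<lambda>z. snd (v c z)" p c, OF _ _ p(1) this]
    obtain C where "supp (k+1) C" "p = psq (k+1) C"
        "\<forall>z. fst (v c z) = - psq (k+1) (dyc C) z \<and> snd (v c z) = psq (k+1) (dxc C) z"
      using dv unfolding dPk_def by blast
    then show ?thesis using p(2) by auto
  qed
  define cc where "cc c = (SOME C. supp (k+1) C \<and> (\<forall>x\<in>tri V c. \<psi> x = psq (k+1) C x) \<and>
      (\<forall>z. fst (v c z) = - psq (k+1) (dyc C) z \<and> snd (v c z) = psq (k+1) (dxc C) z))" for c
  have cc: "supp (k+1) (cc c) \<and> (\<forall>x\<in>tri V c. \<psi> x = psq (k+1) (cc c) x) \<and>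
      (\<forall>z. fst (v c z) = - psq (k+1) (dyc (cc c)) z \<and> snd (v c z) = psq (k+1) (dxc (cc c)) z)" for c
    unfolding cc_def by (rule someI_ex[OF ex])
  show ?thesis
    by (rule that[of \<psi> cc]) (use cg cc in \<open>auto simp: CGspace_def\<close>)
qed

lemma main_supset:
  assumes "rotgrad_range a b V k v"
  shows "div_kernel a b V k (\<lambda>c x. v c x + e)"
proof -
  obtain \<psi> cc where cont: "continuous_on UNIV \<psi>" and per: "\<forall>l\<in>L. \<forall>x. \<psi> (x + l) = \<psi> x"
    and sc: "\<And>c. supp (k+1) (cc c)" and pe: "\<And>c x. x \<in> tri V c \<Longrightarrow> \<psi> x = psq (k+1) (cc c) x"
    and v1: "\<And>c z. fst (v c z) = - psq (k+1) (dyc (cc c)) z" and v2: "\<And>c z. snd (v c z) = psq (k+1) (dxc (cc c)) z"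
    using rr_data[OF assms] by blast
  have dv: "dPk k v" using assms unfolding rotgrad_range_def by blast
  have f1: "(\<lambda>p. fst (v c p + e)) = (\<lambda>z. psq (k+1) (\<lambda>i j. - dyc (cc c) i j) z + fst e)" for c
    by (rule ext) (simp add: v1 psq_uminus)
  have f2: "(\<lambda>p. snd (v c p + e)) = (\<lambda>z. psq (k+1) (dxc (cc c)) z + snd e)" for c
    by (rule ext) (simp add: v2)
  have "dPk k (\<lambda>c x. v c x + e)"
    unfolding dPk_def
  proof
    fix c
    have "poly2 k (\<lambda>z. fst (v c z))" "poly2 k (\<lambda>z. snd (v c z))" using dv by (auto simp: dPk_def)
    from poly2_add_const[OF this(1), of "fst e"] poly2_add_const[OF this(2), of "snd e"]
    show "poly2 k (\<lambda>z. fst (v c z + e)) \<and> poly2 k (\<lambda>z. snd (v c z + e))" by simp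
  qed
  moreover have "divg (\<lambda>x. v c x + e) x = 0" for c x
  proof -
    have "divg (\<lambda>x. v c x + e) x = psq (k+1) (dxc (\<lambda>i j. - dyc (cc c) i j)) x + psq (k+1) (dyc (dxc (cc c))) x"
      unfolding divg_def f1 f2
      using dxdy_psq_const(1)[OF supp_neg[OF supp_dyc[OF sc]]] dxdy_psq_const(2)[OF supp_dxc[OF sc]] by simp
    also have "\<dots> = 0" unfolding dxc_neg psq_uminus dxc_dyc by simp
    finally show ?thesis .
  qed
  moreover have "inner (v c' (x - l) + e) (edge_normal v0 w0) - inner (v c x + e) (edge_normal v0 w0) = 0"
    if l: "l \<in> L" and ne: "(c, 0) \<noteq> (c', l)" and vw: "v0 \<noteq> w0"
      and S: "tri V c \<inter> cell V c' l = closed_segment v0 w0" and x: "x \<in> closed_segment v0 w0" for c c' l v0 w0 x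
  proof -
    define d where "d = w0 - v0"
    define g where "g s = v0 + s *\<^sub>R d" for s :: real
    define q where "q s = psq (k+1) (cc c) (g s) - psq (k+1) (cc c') (g s - l)" for s
    have dv: "det2 d (v c y) = fst d * psq (k+1) (dxc (cc c)) y + snd d * psq (k+1) (dyc (cc c)) y" for c y
      by (simp add: det2_def v1 v2)
    have gD: "(g has_derivative (\<lambda>h. h *\<^sub>R d)) (at s)" for s
      unfolding g_def[abs_def] by (rule derivative_eq_intros refl)+ simp
    have gD': "((\<lambda>s. g s - l) has_derivative (\<lambda>h. h *\<^sub>R d)) (at s)" for s
      using has_derivative_diff[OF gD has_derivative_const[of l]] by simp
    have qD: "(q has_vector_derivative (det2 d (v c (g s)) - det2 d (v c' (g s - l)))) (at s)" for s
    proof -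
      have "(q has_derivative (\<lambda>h. (fst (h *\<^sub>R d) * psq (k+1) (dxc (cc c)) (g s) + snd (h *\<^sub>R d) * psq (k+1) (dyc (cc c)) (g s))
          - (fst (h *\<^sub>R d) * psq (k+1) (dxc (cc c')) (g s - l) + snd (h *\<^sub>R d) * psq (k+1) (dyc (cc c')) (g s - l)))) (at s)"
        unfolding q_def[abs_def]
        by (intro has_derivative_diff has_derivative_compose[OF gD psq_has_derivative[OF sc]]
            has_derivative_compose[OF gD' psq_has_derivative[OF sc]])
      then show ?thesis unfolding has_vector_derivative_def dv by (simp add: algebra_simps)
    qed
    obtain s0 where s0: "s0 \<in> {0..1}" "x = g s0" using x unfolding seg_param g_def d_def by auto
    have q0: "q s = 0" if "s \<in> {0..1}" for s
    proof -
      have gs: "g s \<in> closed_segment v0 w0" unfolding seg_param g_def d_def using that by auto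
      then have "g s \<in> tri V c" "g s \<in> cell V c' l" using S by blast+
      then have "\<psi> (g s) = psq (k+1) (cc c) (g s)" "\<psi> (g s - l) = psq (k+1) (cc c') (g s - l)"
        using pe mem_cell_translate by blast+
      moreover have "\<psi> (g s - l) = \<psi> (g s)" using per l by (metis diff_add_cancel)
      ultimately show ?thesis unfolding q_def by simp
    qed
    have A: "(q has_vector_derivative (det2 d (v c (g s0)) - det2 d (v c' (g s0 - l)))) (at s0 within cbox 0 1)"
      using qD has_vector_derivative_at_within by blast
    have B: "(q has_vector_derivative 0) (at s0 within cbox 0 1)"
      by (rule has_vector_derivative_transform_within[OF has_vector_derivative_const[of 0] zero_less_one])
         (use s0 q0 in auto)
    have "det2 d (v c (g s0)) - det2 d (v c' (g s0 - l)) = 0"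
      using vector_derivative_unique_within_closed_interval[OF zero_less_one _ A B] s0 by simp
    then have "det2 d (v c' (x - l)) = det2 d (v c x)" using s0 by simp
    then show ?thesis using vw unfolding d_def by (simp add: inner_add_left inner_edge_normal)
  qed
  ultimately show ?thesis unfolding div_kernel_def by blast
qed

lemma main_const:
  assumes "rotgrad_range a b V k (const_field e)"
  shows "e = 0"
proof -
  obtain \<psi> cc where cont: "continuous_on UNIV \<psi>" and per: "\<forall>l\<in>L. \<forall>x. \<psi> (x + l) = \<psi> x"
    and sc: "\<And>c. supp (k+1) (cc c)" and pe: "\<And>c x. x \<in> tri V c \<Longrightarrow> \<psi> x = psq (k+1) (cc c) x"
    and v1: "\<And>c z. fst e = - psq (k+1) (dyc (cc c)) z" and v2: "\<And>c z. snd e = psq (k+1) (dxc (cc c)) z"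
    using rr_data[OF assms] unfolding const_field_def by blast
  define g where "g x = snd e * fst x - fst e * snd x" for x :: "real \<times> real"
  have cst: "\<exists>C. \<forall>x. psq (k+1) (cc c) x - g x = C" for c
  proof -
    have "((\<lambda>x. psq (k+1) (cc c) x - g x) has_derivative (\<lambda>h. 0)) (at x within UNIV)" for x
    proof -
      have "((\<lambda>x. psq (k+1) (cc c) x - g x) has_derivative
          (\<lambda>h. (fst h * psq (k+1) (dxc (cc c)) x + snd h * psq (k+1) (dyc (cc c)) x) - (snd e * fst h - fst e * snd h))) (at x)"
        unfolding g_def[abs_def]
        by (intro has_derivative_diff psq_has_derivative[OF sc] has_derivative_mult_right
            bounded_linear_imp_has_derivative bounded_linear_fst bounded_linear_snd)
      moreover have "psq (k+1) (dxc (cc c)) x = snd e" "psq (k+1) (dyc (cc c)) x = - fst e"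
        using v1[of c x] v2[of c x] by simp_all
      ultimately show ?thesis by (simp add: algebra_simps)
    qed
    from has_derivative_zero_constant[OF convex_UNIV this] show ?thesis by blast
  qed
  have glin: "g (x - l) = g x - g l" for x l by (simp add: g_def algebra_simps)
  have "\<psi> x - g x = \<psi> y - g y" for x y
  proof (rule loc_const_cells[where f="\<lambda>x. \<psi> x - g x"])
    fix c l x y assume l: "l \<in> L" and x: "x \<in> cell V c l" and y: "y \<in> cell V c l"
    obtain C where C: "\<And>z. psq (k+1) (cc c) z - g z = C" using cst[of c] by blast
    have "\<psi> z - g z = C - g l" if "z \<in> cell V c l" for z
    proof -
      have "\<psi> z = \<psi> (z - l)" using per l by (metis diff_add_cancel)
      also have "\<dots> = psq (k+1) (cc c) (z - l)" using pe that mem_cell_translate by blast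
      also have "\<dots> = C + g (z - l)" using C[of "z - l"] by simp
      finally show ?thesis unfolding glin by simp
    qed
    then show "\<psi> x - g x = \<psi> y - g y" using x y by simp
  qed
  have La: "a \<in> L" unfolding L_iff by (rule exI[of _ 1], rule exI[of _ 0]) simp
  have Lb: "b \<in> L" unfolding L_iff by (rule exI[of _ 0], rule exI[of _ 1]) simp
  have "\<psi> (0 + a) = \<psi> 0" "\<psi> (0 + b) = \<psi> 0" using per La Lb by blast+
  moreover have "g 0 = 0" by (simp add: g_def)
  ultimately have "g a = 0" "g b = 0" using \<open>\<And>x y. \<psi> x - g x = \<psi> y - g y\<close>[of a 0] \<open>\<And>x y. \<psi> x - g x = \<psi> y - g y\<close>[of b 0] by simp_all
  then have "det2 a e = 0" "det2 b e = 0" by (simp_all add: g_def det2_def algebra_simps)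
  then show "e = 0" using det2_indep_zero detab by blast
qed

end


theorem proposition11:
  fixes a b :: "real \<times> real" and V :: "'c::finite \<Rightarrow> nat \<Rightarrow> real \<times> real" and k :: nat
  assumes "torus_mesh a b V"
  shows "{u. div_kernel a b V k u} =
           {(\<lambda>c x. v c x + e) | v e. rotgrad_range a b V k v}
         \<and> (\<forall>e. rotgrad_range a b V k (const_field e) \<longrightarrow> e = 0)"
proof -
  interpret T: tm a b V by (rule tm.intro) (rule assms)
  have sub: "u \<in> {(\<lambda>c x. v c x + e) | v e. rotgrad_range a b V k v}" if H: "div_kernel a b V k u" for u
  proof -
    interpret D: dk a b V k u by (rule dk.intro[OF T.tm_axioms]) (rule dk_axioms.intro[OF H])
    from D.main_subset show ?thesis by blast
  qed
  have sup: "div_kernel a b V k u" if "u \<in> {(\<lambda>c x. v c x + e) | v e. rotgrad_range a b V k v}" for u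
    using that T.main_supset by blast
  have "{u. div_kernel a b V k u} = {(\<lambda>c x. v c x + e) | v e. rotgrad_range a b V k v}"
    using sub sup by blast
  moreover have "\<forall>e. rotgrad_range a b V k (const_field e) \<longrightarrow> e = 0"
    using T.main_const by blast
  ultimately show ?thesis by blast
qed

end
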